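(* Let $\mathcal{S}\subseteq \mathsf{mod}\Lambda$ be a Serre subcategory. Then $\mathcal{S}$ is both a left finite wide subcategory and a right finite wide subcategory.
   Context: $\Lambda$ is a basic finite-dimensional algebra over a field, $\mathsf{mod}\Lambda$ finitely generated left modules. A Serre subcategory is closed under extensions, submodules and quotients. A wide subcategory is closed under extensions, kernels, cokernels. For a torsion class $\mathcal T$ (closed under extensions and quotients), $\mathcal W_L(\mathcal T)=\{X\in\mathcal T\mid\forall Y\in\mathcal T, f:Y\to X:\ \ker f\in\mathcal T\}$; for a torsion-free class $\mathcal F$ (closed under extensions and submodules), $\mathcal W_R(\mathcal F)=\{X\in\mathcal F\mid\forall Y\in\mathcal F, f:X\to Y:\ \mathrm{coker} f\in\mathcal F\}$. A wide subcategory is left finite (resp. right finite) if it equals $\mathcal W_L(\mathcal T)$ for a functorially finite torsion class $\mathcal T$ (resp. $\mathcal W_R(\mathcal F)$ for a functorially finite torsion-free class $\mathcal F$); functorially finite means every module has left and right approximations by the subcategory. *)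

theory Defs
  imports Main "Jordan_Normal_Form.Matrix"
begin

definition fd_algebra :: "('k::field \<Rightarrow> 'l::ring_1 \<Rightarrow> 'l) \<Rightarrow> bool" where
  "fd_algebra sc \<longleftrightarrow> vector_space sc
     \<and> (\<forall>c x y. sc c (x * y) = sc c x * y \<and> sc c (x * y) = x * sc c y)
     \<and> (\<exists>B. finite B \<and> module.span sc B = UNIV)"

definition primitive_idem :: "'l::ring_1 \<Rightarrow> bool" where
  "primitive_idem e \<longleftrightarrow> e * e = e \<and> e \<noteq> 0 \<and>
     (\<forall>f g. f * f = f \<and> g * g = g \<and> f * g = 0 \<and> g * f = 0 \<and> f + g = e \<longrightarrow> f = 0 \<or> g = 0)"

text \<open>Basic: for a complete set of pairwise orthogonal primitive idempotents
 e_1,...,e_n, the indecomposable projectives Lambda e_i are pairwise non-isomorphic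
 (Lambda e_i \<cong> Lambda e_j iff there are a in e_i Lambda e_j, b in e_j Lambda e_i with ab = e_i, ba = e_j).\<close>

definition basic_algebra :: "'l::ring_1 itself \<Rightarrow> bool" where
  "basic_algebra _ \<longleftrightarrow> (\<forall>es :: 'l list.
     (sum_list es = 1 \<and> (\<forall>i<length es. primitive_idem (es ! i)) \<and>
      (\<forall>i j. i < length es \<and> j < length es \<and> i \<noteq> j \<longrightarrow> es ! i * es ! j = 0))
     \<longrightarrow> (\<forall>i j. i < length es \<and> j < length es \<and> i \<noteq> j \<longrightarrow>
           \<not> (\<exists>a b. a = es ! i * a * es ! j \<and> b = es ! j * b * es ! i
                  \<and> a * b = es ! i \<and> b * a = es ! j)))"

text \<open>A module in mod Lambda is k^n (column vectors) with Lambda acting by n x n matrices.\<close>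

type_synonym ('k, 'l) rep = "nat \<times> ('l \<Rightarrow> 'k mat)"

abbreviation rdim :: "('k, 'l) rep \<Rightarrow> nat" where "rdim M \<equiv> fst M"
abbreviation ract :: "('k, 'l) rep \<Rightarrow> 'l \<Rightarrow> 'k mat" where "ract M \<equiv> snd M"

definition is_module :: "('k::field \<Rightarrow> 'l::ring_1 \<Rightarrow> 'l) \<Rightarrow> ('k, 'l) rep \<Rightarrow> bool" where
  "is_module sc M \<longleftrightarrow>
     (\<forall>x. ract M x \<in> carrier_mat (rdim M) (rdim M)) \<and>
     ract M 1 = 1\<^sub>m (rdim M) \<and>
     (\<forall>x y. ract M (x * y) = ract M x * ract M y) \<and>
     (\<forall>x y. ract M (x + y) = ract M x + ract M y) \<and>
     (\<forall>c x. ract M (sc c x) = c \<cdot>\<^sub>m ract M x)"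

definition is_hom :: "('k::field, 'l) rep \<Rightarrow> ('k, 'l) rep \<Rightarrow> 'k mat \<Rightarrow> bool" where
  "is_hom M N F \<longleftrightarrow> F \<in> carrier_mat (rdim N) (rdim M) \<and> (\<forall>x. F * ract M x = ract N x * F)"

definition is_mono :: "('k::field, 'l) rep \<Rightarrow> ('k, 'l) rep \<Rightarrow> 'k mat \<Rightarrow> bool" where
  "is_mono M N F \<longleftrightarrow> (\<forall>v \<in> carrier_vec (rdim M). F *\<^sub>v v = 0\<^sub>v (rdim N) \<longrightarrow> v = 0\<^sub>v (rdim M))"

definition is_epi :: "('k::field, 'l) rep \<Rightarrow> ('k, 'l) rep \<Rightarrow> 'k mat \<Rightarrow> bool" where
  "is_epi M N F \<longleftrightarrow> (\<forall>w \<in> carrier_vec (rdim N). \<exists>v \<in> carrier_vec (rdim M). F *\<^sub>v v = w)"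

definition is_kernel ::
  "('k::field, 'l) rep \<Rightarrow> ('k, 'l) rep \<Rightarrow> 'k mat \<Rightarrow> ('k, 'l) rep \<Rightarrow> 'k mat \<Rightarrow> bool" where
  "is_kernel M N F K I \<longleftrightarrow> is_hom K M I \<and> is_mono K M I \<and> F * I = 0\<^sub>m (rdim N) (rdim K) \<and>
     (\<forall>v \<in> carrier_vec (rdim M). F *\<^sub>v v = 0\<^sub>v (rdim N) \<longrightarrow> (\<exists>w \<in> carrier_vec (rdim K). I *\<^sub>v w = v))"

definition is_cokernel ::
  "('k::field, 'l) rep \<Rightarrow> ('k, 'l) rep \<Rightarrow> 'k mat \<Rightarrow> ('k, 'l) rep \<Rightarrow> 'k mat \<Rightarrow> bool" where
  "is_cokernel M N F C P \<longleftrightarrow> is_hom N C P \<and> is_epi N C P \<and> P * F = 0\<^sub>m (rdim C) (rdim M) \<and>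
     (\<forall>w \<in> carrier_vec (rdim N). P *\<^sub>v w = 0\<^sub>v (rdim C) \<longrightarrow> (\<exists>v \<in> carrier_vec (rdim M). F *\<^sub>v v = w))"

definition short_exact ::
  "('k::field, 'l) rep \<Rightarrow> ('k, 'l) rep \<Rightarrow> ('k, 'l) rep \<Rightarrow> 'k mat \<Rightarrow> 'k mat \<Rightarrow> bool" where
  "short_exact X Y Z I P \<longleftrightarrow> is_hom X Y I \<and> is_hom Y Z P \<and> is_mono X Y I \<and> is_epi Y Z P \<and>
     P * I = 0\<^sub>m (rdim Z) (rdim X) \<and>
     (\<forall>w \<in> carrier_vec (rdim Y). P *\<^sub>v w = 0\<^sub>v (rdim Z) \<longrightarrow> (\<exists>v \<in> carrier_vec (rdim X). I *\<^sub>v v = w))"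

section \<open>Subcategories (given by their classes of objects; full)\<close>

type_synonym ('k, 'l) subcat = "('k, 'l) rep set"

definition subcat :: "('k::field \<Rightarrow> 'l::ring_1 \<Rightarrow> 'l) \<Rightarrow> ('k, 'l) subcat \<Rightarrow> bool" where
  "subcat sc S \<longleftrightarrow> S \<noteq> {} \<and> (\<forall>M \<in> S. is_module sc M)"

definition ext_closed :: "('k::field \<Rightarrow> 'l::ring_1 \<Rightarrow> 'l) \<Rightarrow> ('k, 'l) subcat \<Rightarrow> bool" where
  "ext_closed sc S \<longleftrightarrow> (\<forall>X Y Z I P. is_module sc X \<and> is_module sc Y \<and> is_module sc Z \<and>
      short_exact X Y Z I P \<and> X \<in> S \<and> Z \<in> S \<longrightarrow> Y \<in> S)"

definition sub_closed :: "('k::field \<Rightarrow> 'l::ring_1 \<Rightarrow> 'l) \<Rightarrow> ('k, 'l) subcat \<Rightarrow> bool" where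
  "sub_closed sc S \<longleftrightarrow> (\<forall>X Y F. is_module sc X \<and> Y \<in> S \<and> is_hom X Y F \<and> is_mono X Y F \<longrightarrow> X \<in> S)"

definition quot_closed :: "('k::field \<Rightarrow> 'l::ring_1 \<Rightarrow> 'l) \<Rightarrow> ('k, 'l) subcat \<Rightarrow> bool" where
  "quot_closed sc S \<longleftrightarrow> (\<forall>X Y F. is_module sc X \<and> Y \<in> S \<and> is_hom Y X F \<and> is_epi Y X F \<longrightarrow> X \<in> S)"

definition ker_closed :: "('k::field \<Rightarrow> 'l::ring_1 \<Rightarrow> 'l) \<Rightarrow> ('k, 'l) subcat \<Rightarrow> bool" where
  "ker_closed sc S \<longleftrightarrow> (\<forall>X Y F K I. X \<in> S \<and> Y \<in> S \<and> is_hom X Y F \<and>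
      is_module sc K \<and> is_kernel X Y F K I \<longrightarrow> K \<in> S)"

definition coker_closed :: "('k::field \<Rightarrow> 'l::ring_1 \<Rightarrow> 'l) \<Rightarrow> ('k, 'l) subcat \<Rightarrow> bool" where
  "coker_closed sc S \<longleftrightarrow> (\<forall>X Y F C P. X \<in> S \<and> Y \<in> S \<and> is_hom X Y F \<and>
      is_module sc C \<and> is_cokernel X Y F C P \<longrightarrow> C \<in> S)"

definition serre_subcat :: "('k::field \<Rightarrow> 'l::ring_1 \<Rightarrow> 'l) \<Rightarrow> ('k, 'l) subcat \<Rightarrow> bool" where
  "serre_subcat sc S \<longleftrightarrow> subcat sc S \<and> ext_closed sc S \<and> sub_closed sc S \<and> quot_closed sc S"

definition wide_subcat :: "('k::field \<Rightarrow> 'l::ring_1 \<Rightarrow> 'l) \<Rightarrow> ('k, 'l) subcat \<Rightarrow> bool" where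
  "wide_subcat sc S \<longleftrightarrow> subcat sc S \<and> ext_closed sc S \<and> ker_closed sc S \<and> coker_closed sc S"

definition torsion_class :: "('k::field \<Rightarrow> 'l::ring_1 \<Rightarrow> 'l) \<Rightarrow> ('k, 'l) subcat \<Rightarrow> bool" where
  "torsion_class sc T \<longleftrightarrow> subcat sc T \<and> ext_closed sc T \<and> quot_closed sc T"

definition torsionfree_class :: "('k::field \<Rightarrow> 'l::ring_1 \<Rightarrow> 'l) \<Rightarrow> ('k, 'l) subcat \<Rightarrow> bool" where
  "torsionfree_class sc F \<longleftrightarrow> subcat sc F \<and> ext_closed sc F \<and> sub_closed sc F"

definition has_right_approx :: "('k::field, 'l) subcat \<Rightarrow> ('k, 'l) rep \<Rightarrow> bool" where
  "has_right_approx T M \<longleftrightarrow> (\<exists>T0 G. T0 \<in> T \<and> is_hom T0 M G \<and>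
     (\<forall>T1 H. T1 \<in> T \<and> is_hom T1 M H \<longrightarrow> (\<exists>U. is_hom T1 T0 U \<and> G * U = H)))"

definition has_left_approx :: "('k::field, 'l) subcat \<Rightarrow> ('k, 'l) rep \<Rightarrow> bool" where
  "has_left_approx T M \<longleftrightarrow> (\<exists>T0 G. T0 \<in> T \<and> is_hom M T0 G \<and>
     (\<forall>T1 H. T1 \<in> T \<and> is_hom M T1 H \<longrightarrow> (\<exists>U. is_hom T0 T1 U \<and> U * G = H)))"

definition functorially_finite :: "('k::field \<Rightarrow> 'l::ring_1 \<Rightarrow> 'l) \<Rightarrow> ('k, 'l) subcat \<Rightarrow> bool" where
  "functorially_finite sc T \<longleftrightarrow>
     (\<forall>M. is_module sc M \<longrightarrow> has_left_approx T M \<and> has_right_approx T M)"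

definition W_L :: "('k::field \<Rightarrow> 'l::ring_1 \<Rightarrow> 'l) \<Rightarrow> ('k, 'l) subcat \<Rightarrow> ('k, 'l) subcat" where
  "W_L sc T = {X \<in> T. \<forall>Y F. Y \<in> T \<and> is_hom Y X F \<longrightarrow>
      (\<forall>K I. is_module sc K \<and> is_kernel Y X F K I \<longrightarrow> K \<in> T)}"

definition W_R :: "('k::field \<Rightarrow> 'l::ring_1 \<Rightarrow> 'l) \<Rightarrow> ('k, 'l) subcat \<Rightarrow> ('k, 'l) subcat" where
  "W_R sc F = {X \<in> F. \<forall>Y G. Y \<in> F \<and> is_hom X Y G \<longrightarrow>
      (\<forall>C P. is_module sc C \<and> is_cokernel X Y G C P \<longrightarrow> C \<in> F)}"

definition left_finite_wide :: "('k::field \<Rightarrow> 'l::ring_1 \<Rightarrow> 'l) \<Rightarrow> ('k, 'l) subcat \<Rightarrow> bool" where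
  "left_finite_wide sc W \<longleftrightarrow> wide_subcat sc W \<and>
     (\<exists>T. torsion_class sc T \<and> functorially_finite sc T \<and> W = W_L sc T)"

definition right_finite_wide :: "('k::field \<Rightarrow> 'l::ring_1 \<Rightarrow> 'l) \<Rightarrow> ('k, 'l) subcat \<Rightarrow> bool" where
  "right_finite_wide sc W \<longleftrightarrow> wide_subcat sc W \<and>
     (\<exists>F. torsionfree_class sc F \<and> functorially_finite sc F \<and> W = W_R sc F)"

end

theory Submission
  imports Defs "Jordan_Normal_Form.Determinant"
begin

definition hcat :: "'a::zero mat \<Rightarrow> 'a mat \<Rightarrow> 'a mat" where
  "hcat A B = four_block_mat A B (0\<^sub>m 0 (dim_col A)) (0\<^sub>m 0 (dim_col B))"

lemma hcat_carrier[simp]: "A \<in> carrier_mat n a \<Longrightarrow> B \<in> carrier_mat n b \<Longrightarrow> hcat A B \<in> carrier_mat n (a+b)"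
  unfolding hcat_def carrier_mat_def by auto

lemma fb_triv: "A \<in> carrier_mat n m \<Longrightarrow> four_block_mat A (0\<^sub>m n 0) (0\<^sub>m 0 m) (0\<^sub>m 0 0) = (A :: 'a :: zero mat)"
  by (rule eq_matI, auto)

lemma hcat_mult_vcat:
  fixes A :: "'a :: comm_ring_1 mat"
  assumes "A \<in> carrier_mat n a" "B \<in> carrier_mat n b" "C \<in> carrier_mat a m" "D \<in> carrier_mat b m"
  shows "hcat A B * (C @\<^sub>r D) = A * C + B * D"
proof -
  have "hcat A B * (C @\<^sub>r D) = four_block_mat A B (0\<^sub>m 0 a) (0\<^sub>m 0 b) * four_block_mat C (0\<^sub>m a 0) D (0\<^sub>m b 0)"
    using assms unfolding hcat_def append_rows_def by auto
  also have "\<dots> = four_block_mat (A * C + B * D) (A * 0\<^sub>m a 0 + B * 0\<^sub>m b 0)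
    (0\<^sub>m 0 a * C + 0\<^sub>m 0 b * D) (0\<^sub>m 0 a * 0\<^sub>m a 0 + 0\<^sub>m 0 b * 0\<^sub>m b 0)"
    by (rule mult_four_block_mat, insert assms, auto)
  also have "\<dots> = four_block_mat (A * C + B * D) (0\<^sub>m n 0) (0\<^sub>m 0 m) (0\<^sub>m 0 0)"
    using assms by (intro cong_four_block_mat, auto)
  also have "\<dots> = A * C + B * D" by (rule fb_triv, insert assms, auto)
  finally show ?thesis .
qed

lemma vcat_mult:
  fixes A :: "'a :: comm_ring_1 mat"
  assumes "A \<in> carrier_mat n1 k" "B \<in> carrier_mat n2 k" "C \<in> carrier_mat k m"
  shows "(A @\<^sub>r B) * C = (A * C) @\<^sub>r (B * C)"
proof -
  have "(A @\<^sub>r B) * C = four_block_mat A (0\<^sub>m n1 0) B (0\<^sub>m n2 0) * four_block_mat C (0\<^sub>m k 0) (0\<^sub>m 0 m) (0\<^sub>m 0 0)"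
    using assms unfolding append_rows_def by (simp add: fb_triv)
  also have "\<dots> = four_block_mat (A * C + 0\<^sub>m n1 0 * 0\<^sub>m 0 m) (A * 0\<^sub>m k 0 + 0\<^sub>m n1 0 * 0\<^sub>m 0 0)
    (B * C + 0\<^sub>m n2 0 * 0\<^sub>m 0 m) (B * 0\<^sub>m k 0 + 0\<^sub>m n2 0 * 0\<^sub>m 0 0)"
    by (rule mult_four_block_mat, insert assms, auto)
  also have "\<dots> = four_block_mat (A * C) (0\<^sub>m n1 0) (B * C) (0\<^sub>m n2 0)"
    using assms by (intro cong_four_block_mat, auto)
  also have "\<dots> = (A * C) @\<^sub>r (B * C)" unfolding append_rows_def using assms by auto
  finally show ?thesis .
qed

lemma mult_hcat:
  fixes A :: "'a :: comm_ring_1 mat"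
  assumes "C \<in> carrier_mat m k" "A \<in> carrier_mat k a" "B \<in> carrier_mat k b"
  shows "C * hcat A B = hcat (C * A) (C * B)"
proof -
  have "C * hcat A B = four_block_mat C (0\<^sub>m m 0) (0\<^sub>m 0 k) (0\<^sub>m 0 0) * four_block_mat A B (0\<^sub>m 0 a) (0\<^sub>m 0 b)"
    using assms unfolding hcat_def by (simp add: fb_triv)
  also have "\<dots> = four_block_mat (C * A + 0\<^sub>m m 0 * 0\<^sub>m 0 a) (C * B + 0\<^sub>m m 0 * 0\<^sub>m 0 b)
    (0\<^sub>m 0 k * A + 0\<^sub>m 0 0 * 0\<^sub>m 0 a) (0\<^sub>m 0 k * B + 0\<^sub>m 0 0 * 0\<^sub>m 0 b)"
    by (rule mult_four_block_mat, insert assms, auto)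
  also have "\<dots> = four_block_mat (C * A) (C * B) (0\<^sub>m 0 a) (0\<^sub>m 0 b)"
    using assms by (intro cong_four_block_mat, auto)
  also have "\<dots> = hcat (C * A) (C * B)" unfolding hcat_def using assms by auto
  finally show ?thesis .
qed

definition bdiag :: "'a::zero mat \<Rightarrow> 'a mat \<Rightarrow> 'a mat" where
  "bdiag X Y = four_block_mat X (0\<^sub>m (dim_row X) (dim_col Y)) (0\<^sub>m (dim_row Y) (dim_col X)) Y"

lemma bdiag_carrier[simp]: "X \<in> carrier_mat a a \<Longrightarrow> Y \<in> carrier_mat b b \<Longrightarrow> bdiag X Y \<in> carrier_mat (a+b) (a+b)"
  unfolding bdiag_def carrier_mat_def by auto

lemma hcat_mult_bdiag:
  fixes A :: "'a :: comm_ring_1 mat"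
  assumes "A \<in> carrier_mat n a" "B \<in> carrier_mat n b" "X \<in> carrier_mat a a" "Y \<in> carrier_mat b b"
  shows "hcat A B * bdiag X Y = hcat (A * X) (B * Y)"
proof -
  have "hcat A B * bdiag X Y = four_block_mat A B (0\<^sub>m 0 a) (0\<^sub>m 0 b) * four_block_mat X (0\<^sub>m a b) (0\<^sub>m b a) Y"
    using assms unfolding hcat_def bdiag_def by auto
  also have "\<dots> = four_block_mat (A * X + B * 0\<^sub>m b a) (A * 0\<^sub>m a b + B * Y)
    (0\<^sub>m 0 a * X + 0\<^sub>m 0 b * 0\<^sub>m b a) (0\<^sub>m 0 a * 0\<^sub>m a b + 0\<^sub>m 0 b * Y)"
    by (rule mult_four_block_mat, insert assms, auto)
  also have "\<dots> = four_block_mat (A * X) (B * Y) (0\<^sub>m 0 a) (0\<^sub>m 0 b)"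
    using assms by (intro cong_four_block_mat, auto)
  also have "\<dots> = hcat (A * X) (B * Y)" unfolding hcat_def using assms by auto
  finally show ?thesis .
qed

lemma bdiag_mult_vcat:
  fixes A :: "'a :: comm_ring_1 mat"
  assumes "A \<in> carrier_mat a n" "B \<in> carrier_mat b n" "X \<in> carrier_mat a a" "Y \<in> carrier_mat b b"
  shows "bdiag X Y * (A @\<^sub>r B) = (X * A) @\<^sub>r (Y * B)"
proof -
  have "bdiag X Y * (A @\<^sub>r B) = four_block_mat X (0\<^sub>m a b) (0\<^sub>m b a) Y * four_block_mat A (0\<^sub>m a 0) B (0\<^sub>m b 0)"
    using assms unfolding append_rows_def bdiag_def by auto
  also have "\<dots> = four_block_mat (X * A + 0\<^sub>m a b * B) (X * 0\<^sub>m a 0 + 0\<^sub>m a b * 0\<^sub>m b 0)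
    (0\<^sub>m b a * A + Y * B) (0\<^sub>m b a * 0\<^sub>m a 0 + Y * 0\<^sub>m b 0)"
    by (rule mult_four_block_mat, insert assms, auto)
  also have "\<dots> = four_block_mat (X * A) (0\<^sub>m a 0) (Y * B) (0\<^sub>m b 0)"
    using assms by (intro cong_four_block_mat, auto)
  also have "\<dots> = (X * A) @\<^sub>r (Y * B)" unfolding append_rows_def using assms by auto
  finally show ?thesis .
qed

lemma bdiag_mult:
  fixes A :: "'a :: comm_ring_1 mat"
  assumes "A \<in> carrier_mat a a" "B \<in> carrier_mat b b" "X \<in> carrier_mat a a" "Y \<in> carrier_mat b b"
  shows "bdiag A B * bdiag X Y = bdiag (A * X) (B * Y)"
proof -
  have "bdiag A B * bdiag X Y = four_block_mat A (0\<^sub>m a b) (0\<^sub>m b a) B * four_block_mat X (0\<^sub>m a b) (0\<^sub>m b a) Y"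
    using assms unfolding bdiag_def by auto
  also have "\<dots> = four_block_mat (A * X + 0\<^sub>m a b * 0\<^sub>m b a) (A * 0\<^sub>m a b + 0\<^sub>m a b * Y)
    (0\<^sub>m b a * X + B * 0\<^sub>m b a) (0\<^sub>m b a * 0\<^sub>m a b + B * Y)"
    by (rule mult_four_block_mat, insert assms, auto)
  also have "\<dots> = four_block_mat (A * X) (0\<^sub>m a b) (0\<^sub>m b a) (B * Y)"
    using assms by (intro cong_four_block_mat, auto)
  also have "\<dots> = bdiag (A * X) (B * Y)" unfolding bdiag_def using assms by auto
  finally show ?thesis .
qed

lemma bdiag_add:
  fixes A :: "'a :: comm_ring_1 mat"
  assumes "A \<in> carrier_mat a a" "B \<in> carrier_mat b b" "X \<in> carrier_mat a a" "Y \<in> carrier_mat b b"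
  shows "bdiag A B + bdiag X Y = bdiag (A + X) (B + Y)"
  by (rule eq_matI, insert assms, auto simp: bdiag_def)

lemma bdiag_smult:
  fixes A :: "'a :: comm_ring_1 mat"
  assumes "A \<in> carrier_mat a a" "B \<in> carrier_mat b b"
  shows "c \<cdot>\<^sub>m bdiag A B = bdiag (c \<cdot>\<^sub>m A) (c \<cdot>\<^sub>m B)"
  by (rule eq_matI, insert assms, auto simp: bdiag_def)

lemma bdiag_one: "bdiag (1\<^sub>m a) (1\<^sub>m b) = (1\<^sub>m (a+b) :: 'a :: comm_ring_1 mat)"
  unfolding bdiag_def by simp

lemma append_vec_cv0: "x \<in> carrier_vec 0 \<Longrightarrow> v @\<^sub>v x = v"
  by (rule eq_vecI, auto)

lemma hcat_mult_vec:
  fixes A :: "'a :: comm_ring_1 mat"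
  assumes "A \<in> carrier_mat n a" "B \<in> carrier_mat n b" "u \<in> carrier_vec a" "w \<in> carrier_vec b"
  shows "hcat A B *\<^sub>v (u @\<^sub>v w) = A *\<^sub>v u + B *\<^sub>v w"
proof -
  have "hcat A B *\<^sub>v (u @\<^sub>v w) = (A *\<^sub>v u + B *\<^sub>v w) @\<^sub>v (0\<^sub>m 0 a *\<^sub>v u + 0\<^sub>m 0 b *\<^sub>v w)"
    unfolding hcat_def using assms by (subst four_block_mat_mult_vec, auto)
  also have "\<dots> = A *\<^sub>v u + B *\<^sub>v w"
  proof (rule append_vec_cv0)
    show "0\<^sub>m 0 a *\<^sub>v u + 0\<^sub>m 0 b *\<^sub>v w \<in> carrier_vec 0"
      by (rule carrier_vecI, simp del: vec_of_dim_0)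
  qed
  finally show ?thesis .
qed

lemma zero_vec_split: "0\<^sub>v (a + b) = 0\<^sub>v a @\<^sub>v (0\<^sub>v b :: 'a :: zero vec)"
  by (rule eq_vecI, auto)

lemma det_inv:
  fixes A :: "'a :: field mat"
  assumes A: "A \<in> carrier_mat n n" and d: "det A \<noteq> 0"
  shows "\<exists>B \<in> carrier_mat n n. A * B = 1\<^sub>m n \<and> B * A = 1\<^sub>m n"
proof -
  from det_non_zero_imp_unit[OF A d, of "()"]
  have "A \<in> Units (ring_mat TYPE('a) n ())" .
  hence "\<exists>x \<in> carrier (ring_mat TYPE('a) n ()). x \<otimes>\<^bsub>ring_mat TYPE('a) n ()\<^esub> A = \<one>\<^bsub>ring_mat TYPE('a) n ()\<^esub> \<and> A \<otimes>\<^bsub>ring_mat TYPE('a) n ()\<^esub> x = \<one>\<^bsub>ring_mat TYPE('a) n ()\<^esub>"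
    unfolding Units_def by simp
  hence "\<exists>x \<in> carrier_mat n n. x * A = 1\<^sub>m n \<and> A * x = 1\<^sub>m n"
    unfolding ring_mat_simps .
  thus ?thesis by blast
qed

lemma app_rows_last_zero:
  fixes A :: "'a :: field mat"
  assumes A: "A \<in> carrier_mat b a" and ab: "b < a" and j: "j < a"
  shows "(A @\<^sub>r (0\<^sub>m (a - b) a)) $$ (a - 1, j) = 0"
proof -
  have d: "dim_row A = b" "dim_col A = a" using A by auto
  have e: "A @\<^sub>r (0\<^sub>m (a - b) a) = four_block_mat A (0\<^sub>m b 0) (0\<^sub>m (a - b) a) (0\<^sub>m (a - b) 0)"
    unfolding append_rows_def d by simp
  have i: "a - 1 < dim_row A + dim_row (0\<^sub>m (a - b) 0 :: 'a mat)" "j < dim_col A + dim_col (0\<^sub>m (a - b) 0 :: 'a mat)"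
    using d ab j by auto
  show ?thesis unfolding e
    apply (subst index_mat_four_block(1)[OF i])
    using d ab j by simp
qed

lemma mono_le:
  fixes A :: "'a :: field mat"
  assumes A: "A \<in> carrier_mat b a" and mono: "\<forall>v\<in>carrier_vec a. A *\<^sub>v v = 0\<^sub>v b \<longrightarrow> v = 0\<^sub>v a"
  shows "a \<le> b"
proof (rule ccontr)
  assume "\<not> a \<le> b"
  hence ab: "b < a" by auto
  define A' where "A' = A @\<^sub>r (0\<^sub>m (a - b) a)"
  have ab': "b + (a - b) = a" using ab by auto
  have A'c0: "A' \<in> carrier_mat (b + (a - b)) a" unfolding A'_def
    by (rule carrier_append_rows[OF A zero_carrier_mat])
  hence A'c: "A' \<in> carrier_mat a a" unfolding ab' .
  have "det A' \<noteq> 0"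
  proof
    assume "det A' = 0"
    from this[unfolded det_0_iff_vec_prod_zero[OF A'c]] obtain v where
      v: "v \<in> carrier_vec a" "v \<noteq> 0\<^sub>v a" "A' *\<^sub>v v = 0\<^sub>v a" by blast
    have "A' *\<^sub>v v = (A *\<^sub>v v) @\<^sub>v (0\<^sub>m (a - b) a *\<^sub>v v)"
      unfolding A'_def by (rule mat_mult_append[OF A zero_carrier_mat v(1)])
    moreover have "0\<^sub>v a = 0\<^sub>v b @\<^sub>v (0\<^sub>v (a - b) :: 'a vec)" using zero_vec_split[of b "a-b"] unfolding ab' .
    ultimately have "(A *\<^sub>v v) @\<^sub>v (0\<^sub>m (a - b) a *\<^sub>v v) = 0\<^sub>v b @\<^sub>v (0\<^sub>v (a - b) :: 'a vec)" using v(3) by simp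
    moreover have "A *\<^sub>v v \<in> carrier_vec b" using A v(1) by simp
    ultimately have "A *\<^sub>v v = 0\<^sub>v b" using append_vec_eq[of "A *\<^sub>v v" b "0\<^sub>v b"] by simp
    with mono v show False by blast
  qed
  from det_inv[OF A'c this] obtain B where B: "B \<in> carrier_mat a a" "A' * B = 1\<^sub>m a" by blast
  have r: "row A' (a - 1) = 0\<^sub>v a"
  proof (rule eq_vecI)
    fix j assume "j < dim_vec (0\<^sub>v a :: 'a vec)"
    hence j: "j < a" by simp
    have "A' $$ (a - 1, j) = 0" unfolding A'_def by (rule app_rows_last_zero[OF A ab j])
    moreover have "row A' (a - 1) $ j = A' $$ (a - 1, j)"
      by (rule index_row(1), insert A'c j ab, auto)
    moreover have "0\<^sub>v a $ j = (0 :: 'a)" using j by (rule index_zero_vec(1))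
    ultimately show "row A' (a - 1) $ j = 0\<^sub>v a $ j" by simp
  next
    show "dim_vec (row A' (a - 1)) = dim_vec (0\<^sub>v a :: 'a vec)" using A'c by simp
  qed
  have "(A' * B) $$ (a - 1, a - 1) = row A' (a - 1) \<bullet> col B (a - 1)"
    using A'c B ab by (subst index_mult_mat(1), auto)
  also have "\<dots> = 0" unfolding r using B ab by (subst scalar_prod_left_zero[of _ a], auto)
  finally have "(A' * B) $$ (a - 1, a - 1) = 0" .
  moreover have "(A' * B) $$ (a - 1, a - 1) = 1" using B(2) ab by simp
  ultimately show False by simp
qed

lemma right_inv:
  fixes A :: "'a :: field mat"
  assumes A: "A \<in> carrier_mat b a" and epi: "\<forall>w\<in>carrier_vec b. \<exists>v\<in>carrier_vec a. A *\<^sub>v v = w"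
  shows "\<exists>R \<in> carrier_mat a b. A * R = 1\<^sub>m b"
proof -
  define f where "f j = (SOME v. v \<in> carrier_vec a \<and> A *\<^sub>v v = unit_vec b j)" for j
  have f: "f j \<in> carrier_vec a \<and> A *\<^sub>v f j = unit_vec b j" for j
  proof -
    from epi unit_vec_carrier[of b j] have "\<exists>v. v \<in> carrier_vec a \<and> A *\<^sub>v v = unit_vec b j" by blast
    thus ?thesis unfolding f_def by (rule someI_ex)
  qed
  define R where "R = mat a b (\<lambda>(i,j). f j $ i)"
  have Rc: "R \<in> carrier_mat a b" unfolding R_def by (rule mat_carrier)
  have colR: "col R j = f j" if j: "j < b" for j
  proof -
    have "col R j = vec a (\<lambda>i. f j $ i)" unfolding R_def using j by simp
    also have "\<dots> = f j" using f[of j] by (intro eq_vecI, auto)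
    finally show ?thesis .
  qed
  have "A * R = 1\<^sub>m b"
  proof (rule eq_matI)
    fix i j assume "i < dim_row (1\<^sub>m b :: 'a mat)" "j < dim_col (1\<^sub>m b :: 'a mat)"
    hence ij: "i < b" "j < b" by auto
    have "(A * R) $$ (i, j) = row A i \<bullet> col R j" by (rule index_mult_mat(1), insert A Rc ij, auto)
    also have "\<dots> = (A *\<^sub>v col R j) $ i" by (rule index_mult_mat_vec[symmetric], insert A ij, auto)
    also have "\<dots> = unit_vec b j $ i" using colR[OF ij(2)] f[of j] by simp
    also have "\<dots> = 1\<^sub>m b $$ (i, j)" using ij by simp
    finally show "(A * R) $$ (i, j) = 1\<^sub>m b $$ (i, j)" .
  qed (insert A Rc, auto)
  with Rc show ?thesis by blast
qed

lemma epi_le: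
  fixes A :: "'a :: field mat"
  assumes A: "A \<in> carrier_mat b a" and epi: "\<forall>w\<in>carrier_vec b. \<exists>v\<in>carrier_vec a. A *\<^sub>v v = w"
  shows "b \<le> a"
proof -
  from right_inv[OF A epi] obtain R where R: "R \<in> carrier_mat a b" "A * R = 1\<^sub>m b" by auto
  show ?thesis
  proof (rule mono_le[OF R(1)], intro ballI impI)
    fix v assume v: "v \<in> carrier_vec b" "R *\<^sub>v v = 0\<^sub>v a"
    have "v = (A * R) *\<^sub>v v" using R v by simp
    also have "\<dots> = A *\<^sub>v (R *\<^sub>v v)" by (rule assoc_mult_mat_vec, insert A R v, auto)
    also have "\<dots> = A *\<^sub>v 0\<^sub>v a" using v(2) by simp
    also have "\<dots> = 0\<^sub>v b" using A by auto
    finally show "v = 0\<^sub>v b" .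
  qed
qed

lemma mono_sq_inv:
  fixes A :: "'a :: field mat"
  assumes A: "A \<in> carrier_mat n n" and mono: "\<forall>v\<in>carrier_vec n. A *\<^sub>v v = 0\<^sub>v n \<longrightarrow> v = 0\<^sub>v n"
  shows "\<exists>B \<in> carrier_mat n n. A * B = 1\<^sub>m n \<and> B * A = 1\<^sub>m n"
proof (rule det_inv[OF A])
  show "det A \<noteq> 0" unfolding det_0_iff_vec_prod_zero[OF A] using mono by blast
qed

lemma epi_sq_inv:
  fixes A :: "'a :: field mat"
  assumes A: "A \<in> carrier_mat n n" and epi: "\<forall>w\<in>carrier_vec n. \<exists>v\<in>carrier_vec n. A *\<^sub>v v = w"
  shows "\<exists>B \<in> carrier_mat n n. A * B = 1\<^sub>m n \<and> B * A = 1\<^sub>m n"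
proof -
  from right_inv[OF A epi] obtain R where R: "R \<in> carrier_mat n n" "A * R = 1\<^sub>m n" by auto
  with mat_mult_left_right_inverse[OF A R(1) R(2)] show ?thesis by auto
qed

lemma mono_inj:
  fixes J :: "'a :: field mat"
  assumes J: "J \<in> carrier_mat m d" and mono: "\<forall>v\<in>carrier_vec d. J *\<^sub>v v = 0\<^sub>v m \<longrightarrow> v = 0\<^sub>v d"
    and u: "u \<in> carrier_vec d" and u': "u' \<in> carrier_vec d" and eq: "J *\<^sub>v u = J *\<^sub>v u'"
  shows "u = u'"
proof -
  have "J *\<^sub>v (u - u') = J *\<^sub>v u - J *\<^sub>v u'"
    by (rule mult_minus_distrib_mat_vec[OF J u u'])
  also have "\<dots> = 0\<^sub>v m" unfolding eq by (rule minus_cancel_vec, insert J u', auto)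
  finally have z0: "J *\<^sub>v (u - u') = 0\<^sub>v m" .
  have uu: "u - u' \<in> carrier_vec d" using u u' by simp
  from mono[rule_format, OF uu z0] have z: "u - u' = 0\<^sub>v d" .
  show "u = u'"
  proof (rule eq_vecI)
    fix i assume "i < dim_vec u'"
    hence i: "i < d" using u' by auto
    from arg_cong[OF z, of "\<lambda>x. x $ i"] show "u $ i = u' $ i" using u u' i by auto
  qed (insert u u', auto)
qed

lemma left_cancel:
  fixes J :: "'a :: field mat"
  assumes J: "J \<in> carrier_mat m d" and mono: "\<forall>v\<in>carrier_vec d. J *\<^sub>v v = 0\<^sub>v m \<longrightarrow> v = 0\<^sub>v d"
    and B: "B \<in> carrier_mat d k" and C: "C \<in> carrier_mat d k" and eq: "J * B = J * C"
  shows "B = C"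
proof (rule mat_col_eqI)
  fix j assume "j < dim_col C"
  hence j: "j < k" using C by auto
  have "J *\<^sub>v col B j = col (J * B) j" by (rule col_mult2[OF J B j, symmetric])
  also have "\<dots> = col (J * C) j" unfolding eq ..
  also have "\<dots> = J *\<^sub>v col C j" by (rule col_mult2[OF J C j])
  finally have e: "J *\<^sub>v col B j = J *\<^sub>v col C j" .
  show "col B j = col C j"
    by (rule mono_inj[OF J mono _ _ e], insert B C j, auto)
qed (insert B C, auto)

lemma cv0_zero: "x \<in> carrier_vec 0 \<Longrightarrow> x = 0\<^sub>v 0"
  by (rule eq_vecI, auto)

lemma zero_mat_mult_vec: "v \<in> carrier_vec nc \<Longrightarrow> 0\<^sub>m nr nc *\<^sub>v v = (0\<^sub>v nr :: 'a :: comm_ring_1 vec)"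
  by (rule eq_vecI, auto simp: scalar_prod_def)

lemma mat_mult_zero_vec: "A \<in> carrier_mat nr nc \<Longrightarrow> A *\<^sub>v 0\<^sub>v nc = (0\<^sub>v nr :: 'a :: comm_ring_1 vec)"
  by (rule eq_vecI, auto)

lemma mat_col1_mult:
  fixes w :: "'a :: comm_ring_1 vec"
  assumes w: "w \<in> carrier_vec m" and y: "y \<in> carrier_vec 1"
  shows "mat_of_cols m [w] *\<^sub>v y = (y $ 0) \<cdot>\<^sub>v w"
proof (rule eq_vecI)
  fix i assume "i < dim_vec ((y $ 0) \<cdot>\<^sub>v w)"
  hence i: "i < m" using w by simp
  have dy: "dim_vec y = 1" using y by simp
  have "(mat_of_cols m [w] *\<^sub>v y) $ i = row (mat_of_cols m [w]) i \<bullet> y"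
    by (rule index_mult_mat_vec, insert i, simp)
  also have "\<dots> = row (mat_of_cols m [w]) i $ 0 * y $ 0"
    unfolding scalar_prod_def dy by simp
  also have "row (mat_of_cols m [w]) i $ 0 = w $ i"
    using i by (simp add: mat_of_cols_def)
  finally show "(mat_of_cols m [w] *\<^sub>v y) $ i = ((y $ 0) \<cdot>\<^sub>v w) $ i"
    using i w by (simp add: mult.commute)
qed (insert w, simp)

definition mmono :: "'a :: field mat \<Rightarrow> nat \<Rightarrow> nat \<Rightarrow> bool" where
  "mmono J d m \<longleftrightarrow> (\<forall>v\<in>carrier_vec d. J *\<^sub>v v = 0\<^sub>v m \<longrightarrow> v = 0\<^sub>v d)"

definition inimg :: "'a :: field mat \<Rightarrow> nat \<Rightarrow> 'a mat \<Rightarrow> nat \<Rightarrow> bool" where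
  "inimg J d F n \<longleftrightarrow> (\<forall>u\<in>carrier_vec d. \<exists>v\<in>carrier_vec n. J *\<^sub>v u = F *\<^sub>v v)"

lemma img_basis:
  fixes F :: "'a :: field mat"
  assumes F: "F \<in> carrier_mat m n"
  shows "\<exists>d J. J \<in> carrier_mat m d \<and> (\<forall>v\<in>carrier_vec d. J *\<^sub>v v = 0\<^sub>v m \<longrightarrow> v = 0\<^sub>v d)
     \<and> (\<forall>u\<in>carrier_vec d. \<exists>v\<in>carrier_vec n. J *\<^sub>v u = F *\<^sub>v v)
     \<and> (\<forall>v\<in>carrier_vec n. \<exists>u\<in>carrier_vec d. F *\<^sub>v v = J *\<^sub>v u)"
proof -
  define P where "P d \<longleftrightarrow> (\<exists>J. J \<in> carrier_mat m d \<and> mmono J d m \<and> inimg J d F n)" for d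
  have P0: "P 0" unfolding P_def
  proof (intro exI[of _ "0\<^sub>m m 0"] conjI)
    show "0\<^sub>m m 0 \<in> carrier_mat m 0" by simp
  next
    show "mmono (0\<^sub>m m 0) 0 m" unfolding mmono_def using cv0_zero by blast
  next
    show "inimg (0\<^sub>m m 0) 0 F n" unfolding inimg_def
    proof
      fix u :: "'a vec" assume u: "u \<in> carrier_vec 0"
      have "0\<^sub>m m 0 *\<^sub>v u = 0\<^sub>v m" by (rule zero_mat_mult_vec[OF u])
      also have "\<dots> = F *\<^sub>v 0\<^sub>v n" using F by (simp add: mat_mult_zero_vec)
      finally have "0\<^sub>m m 0 *\<^sub>v u = F *\<^sub>v 0\<^sub>v n" .
      moreover have "0\<^sub>v n \<in> carrier_vec n" by simp
      ultimately show "\<exists>v\<in>carrier_vec n. 0\<^sub>m m 0 *\<^sub>v u = F *\<^sub>v v" by (rule bexI)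
    qed
  qed
  have Pb: "d \<le> m" if "P d" for d
  proof -
    from that obtain J :: "'a mat" where "J \<in> carrier_mat m d" "mmono J d m"
      unfolding P_def by blast
    thus ?thesis unfolding mmono_def by (rule mono_le)
  qed
  have fin: "finite {d. P d}"
  proof (rule finite_subset)
    show "{d. P d} \<subseteq> {..m}" using Pb by blast
  qed simp
  define d where "d = Max {d. P d}"
  have "d \<in> {d. P d}" unfolding d_def using fin P0 by (intro Max_in) auto
  hence "P d" by simp
  then obtain J :: "'a mat" where J: "J \<in> carrier_mat m d" and mono': "mmono J d m"
    and img': "inimg J d F n" unfolding P_def by blast
  have mono: "\<forall>v\<in>carrier_vec d. J *\<^sub>v v = 0\<^sub>v m \<longrightarrow> v = 0\<^sub>v d" using mono' unfolding mmono_def .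
  have img: "\<forall>u\<in>carrier_vec d. \<exists>v\<in>carrier_vec n. J *\<^sub>v u = F *\<^sub>v v" using img' unfolding inimg_def .
  have "\<forall>v\<in>carrier_vec n. \<exists>u\<in>carrier_vec d. F *\<^sub>v v = J *\<^sub>v u"
  proof (rule ccontr)
    assume "\<not> (\<forall>v\<in>carrier_vec n. \<exists>u\<in>carrier_vec d. F *\<^sub>v v = J *\<^sub>v u)"
    then obtain v where v: "v \<in> carrier_vec n" and nv: "\<forall>u\<in>carrier_vec d. F *\<^sub>v v \<noteq> J *\<^sub>v u" by blast
    define w where "w = F *\<^sub>v v"
    have w: "w \<in> carrier_vec m" using F v w_def by simp
    define J' where "J' = hcat J (mat_of_cols m [w])"
    have J': "J' \<in> carrier_mat m (d + 1)" unfolding J'_def using J w by (intro hcat_carrier) auto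
    have split: "x = vec_first x d @\<^sub>v vec_last x 1" if "x \<in> carrier_vec (d+1)" for x :: "'a vec"
      using that by simp
    have J'x: "J' *\<^sub>v x = J *\<^sub>v vec_first x d + (vec_last x 1 $ 0) \<cdot>\<^sub>v w" if x: "x \<in> carrier_vec (d+1)" for x :: "'a vec"
    proof -
      have "J' *\<^sub>v x = J' *\<^sub>v (vec_first x d @\<^sub>v vec_last x 1)" using split[OF x] by simp
      also have "\<dots> = J *\<^sub>v vec_first x d + mat_of_cols m [w] *\<^sub>v vec_last x 1"
        unfolding J'_def by (rule hcat_mult_vec, insert J w, auto)
      also have "mat_of_cols m [w] *\<^sub>v vec_last x 1 = (vec_last x 1 $ 0) \<cdot>\<^sub>v w"
        by (rule mat_col1_mult[OF w], simp)
      finally show ?thesis .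
    qed
    have "mmono J' (d + 1) m" unfolding mmono_def
    proof (intro ballI impI)
      fix x :: "'a vec" assume x: "x \<in> carrier_vec (d + 1)" and z: "J' *\<^sub>v x = 0\<^sub>v m"
      define u where "u = vec_first x d"
      define t where "t = vec_last x 1 $ 0"
      have u: "u \<in> carrier_vec d" by (simp add: u_def)
      have Ju: "J *\<^sub>v u \<in> carrier_vec m" using J u by simp
      have eq: "J *\<^sub>v u + t \<cdot>\<^sub>v w = 0\<^sub>v m" using J'x[OF x] z unfolding u_def t_def by simp
      have eqi: "(J *\<^sub>v u) $ i + t * w $ i = 0" if i: "i < m" for i
      proof -
        have "(J *\<^sub>v u + t \<cdot>\<^sub>v w) $ i = 0" using eq i by simp
        thus ?thesis using i Ju w by simp
      qed
      have t0: "t = 0"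
      proof (rule ccontr)
        assume t: "t \<noteq> 0"
        have "F *\<^sub>v v = J *\<^sub>v ((- inverse t) \<cdot>\<^sub>v u)"
        proof (rule eq_vecI)
          fix i assume "i < dim_vec (J *\<^sub>v ((- inverse t) \<cdot>\<^sub>v u))"
          hence i: "i < m" using J by simp
          have "J *\<^sub>v ((- inverse t) \<cdot>\<^sub>v u) = (- inverse t) \<cdot>\<^sub>v (J *\<^sub>v u)"
            by (rule mult_mat_vec[OF J u])
          hence "(J *\<^sub>v ((- inverse t) \<cdot>\<^sub>v u)) $ i = (- inverse t) * (J *\<^sub>v u) $ i"
            using i J by simp
          also have "(J *\<^sub>v u) $ i = - t * w $ i" using eqi[OF i] by (simp add: eq_neg_iff_add_eq_0)
          finally have "(J *\<^sub>v ((- inverse t) \<cdot>\<^sub>v u)) $ i = w $ i" using t by simp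
          thus "(F *\<^sub>v v) $ i = (J *\<^sub>v ((- inverse t) \<cdot>\<^sub>v u)) $ i" unfolding w_def by simp
        next
          show "dim_vec (F *\<^sub>v v) = dim_vec (J *\<^sub>v ((- inverse t) \<cdot>\<^sub>v u))" using F J by simp
        qed
        moreover have "(- inverse t) \<cdot>\<^sub>v u \<in> carrier_vec d" using u by simp
        ultimately show False using nv by blast
      qed
      have "J *\<^sub>v u = 0\<^sub>v m"
      proof (rule eq_vecI)
        fix i assume "i < dim_vec (0\<^sub>v m :: 'a vec)"
        hence i: "i < m" by simp
        show "(J *\<^sub>v u) $ i = 0\<^sub>v m $ i" using eqi[OF i] t0 i by simp
      qed (insert J, simp)
      hence u0: "u = 0\<^sub>v d" using mono u by blast
      have l0: "vec_last x 1 = 0\<^sub>v 1"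
      proof (rule eq_vecI)
        fix i assume "i < dim_vec (0\<^sub>v 1 :: 'a vec)"
        hence "i = 0" by simp
        thus "vec_last x 1 $ i = 0\<^sub>v 1 $ i" using t0 unfolding t_def by simp
      qed simp
      show "x = 0\<^sub>v (d + 1)" using split[OF x] unfolding u_def[symmetric] u0 l0 zero_vec_split[symmetric] .
    qed
    moreover have "inimg J' (d + 1) F n" unfolding inimg_def
    proof
      fix x :: "'a vec" assume x: "x \<in> carrier_vec (d + 1)"
      from img obtain v1 where v1: "v1 \<in> carrier_vec n" "J *\<^sub>v vec_first x d = F *\<^sub>v v1"
        using vec_first_carrier by blast
      define t where "t = vec_last x 1 $ 0"
      have "J' *\<^sub>v x = F *\<^sub>v v1 + t \<cdot>\<^sub>v (F *\<^sub>v v)" using J'x[OF x] v1 unfolding t_def w_def by simp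
      also have "t \<cdot>\<^sub>v (F *\<^sub>v v) = F *\<^sub>v (t \<cdot>\<^sub>v v)" by (rule mult_mat_vec[OF F v, symmetric])
      also have "F *\<^sub>v v1 + F *\<^sub>v (t \<cdot>\<^sub>v v) = F *\<^sub>v (v1 + t \<cdot>\<^sub>v v)"
        by (rule mult_add_distrib_mat_vec[OF F v1(1), symmetric], insert v, simp)
      finally have "J' *\<^sub>v x = F *\<^sub>v (v1 + t \<cdot>\<^sub>v v)" .
      moreover have "v1 + t \<cdot>\<^sub>v v \<in> carrier_vec n" using v v1 by simp
      ultimately show "\<exists>v'\<in>carrier_vec n. J' *\<^sub>v x = F *\<^sub>v v'" by (rule bexI)
    qed
    ultimately have "P (d + 1)" unfolding P_def using J' by blast
    hence "d + 1 \<in> {d. P d}" by simp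
    hence "d + 1 \<le> d" unfolding d_def using fin by (intro Max_ge)
    thus False by simp
  qed
  thus ?thesis using J mono img by blast
qed

lemma col_unit:
  fixes A :: "'a :: comm_ring_1 mat"
  assumes A: "A \<in> carrier_mat m n" and j: "j < n"
  shows "col A j = A *\<^sub>v unit_vec n (j::nat)"
proof (rule eq_vecI)
  fix i assume "i < dim_vec (A *\<^sub>v unit_vec n j)"
  hence i: "i < m" using A by simp
  have "(A *\<^sub>v unit_vec n j) $ i = row A i \<bullet> unit_vec n j" using A i by simp
  also have "\<dots> = row A i $ j" by (rule scalar_prod_right_unit[OF j])
  also have "\<dots> = A $$ (i, j)" using A i j by simp
  finally show "col A j $ i = (A *\<^sub>v unit_vec n j) $ i" using A i j by simp
qed (insert A, simp)

definition zmod :: "('k::field, 'l) rep" where "zmod = (0, \<lambda>x. 1\<^sub>m 0)"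

lemma zmod_module: "is_module (sc :: 'k::field \<Rightarrow> 'l::ring_1 \<Rightarrow> 'l) (zmod :: ('k,'l) rep)"
  unfolding is_module_def zmod_def by (auto intro!: eq_matI)

definition dsum :: "('k::field, 'l) rep \<Rightarrow> ('k, 'l) rep \<Rightarrow> ('k, 'l) rep" where
  "dsum X Y = (rdim X + rdim Y, \<lambda>x. bdiag (ract X x) (ract Y x))"

lemma dsum_module:
  fixes sc :: "'k::field \<Rightarrow> 'l::ring_1 \<Rightarrow> 'l" and X Y :: "('k, 'l) rep"
  assumes X: "is_module sc X" and Y: "is_module sc Y"
  shows "is_module sc (dsum X Y)"
proof -
  define a where "a = rdim X"
  define b where "b = rdim Y"
  have cX: "ract X x \<in> carrier_mat a a" for x using X unfolding is_module_def a_def by simp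
  have cY: "ract Y x \<in> carrier_mat b b" for x using Y unfolding is_module_def b_def by simp
  have X1: "ract X 1 = 1\<^sub>m a" using X unfolding is_module_def a_def by simp
  have Y1: "ract Y 1 = 1\<^sub>m b" using Y unfolding is_module_def b_def by simp
  have Xm: "ract X (x * y) = ract X x * ract X y" for x y using X unfolding is_module_def by simp
  have Ym: "ract Y (x * y) = ract Y x * ract Y y" for x y using Y unfolding is_module_def by simp
  have Xa: "ract X (x + y) = ract X x + ract X y" for x y using X unfolding is_module_def by simp
  have Ya: "ract Y (x + y) = ract Y x + ract Y y" for x y using Y unfolding is_module_def by simp
  have Xs: "ract X (sc c x) = c \<cdot>\<^sub>m ract X x" for c x using X unfolding is_module_def by simp
  have Ys: "ract Y (sc c x) = c \<cdot>\<^sub>m ract Y x" for c x using Y unfolding is_module_def by simp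
  show ?thesis unfolding is_module_def dsum_def fst_conv snd_conv a_def[symmetric] b_def[symmetric]
  proof (intro conjI allI)
    fix x show "bdiag (ract X x) (ract Y x) \<in> carrier_mat (a + b) (a + b)" using cX cY by simp
  next
    show "bdiag (ract X 1) (ract Y 1) = 1\<^sub>m (a + b)" unfolding X1 Y1 by (rule bdiag_one)
  next
    fix x y show "bdiag (ract X (x * y)) (ract Y (x * y)) = bdiag (ract X x) (ract Y x) * bdiag (ract X y) (ract Y y)"
      unfolding Xm Ym by (rule bdiag_mult[symmetric], insert cX cY, auto)
  next
    fix x y show "bdiag (ract X (x + y)) (ract Y (x + y)) = bdiag (ract X x) (ract Y x) + bdiag (ract X y) (ract Y y)"
      unfolding Xa Ya by (rule bdiag_add[symmetric], insert cX cY, auto)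
  next
    fix c x show "bdiag (ract X (sc c x)) (ract Y (sc c x)) = c \<cdot>\<^sub>m bdiag (ract X x) (ract Y x)"
      unfolding Xs Ys by (rule bdiag_smult[symmetric], insert cX cY, auto)
  qed
qed

lemma dsum_in:
  fixes sc :: "'k::field \<Rightarrow> 'l::ring_1 \<Rightarrow> 'l" and X Y :: "('k, 'l) rep"
  assumes ext: "ext_closed sc S" and X: "is_module sc X" and Y: "is_module sc Y"
    and XS: "X \<in> S" and YS: "Y \<in> S"
  shows "dsum X Y \<in> S"
proof -
  define a where "a = rdim X"
  define b where "b = rdim Y"
  have cX: "ract X x \<in> carrier_mat a a" for x using X unfolding is_module_def a_def by simp
  have cY: "ract Y x \<in> carrier_mat b b" for x using Y unfolding is_module_def b_def by simp
  define I :: "'k mat" where "I = 1\<^sub>m a @\<^sub>r 0\<^sub>m b a"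
  define P :: "'k mat" where "P = hcat (0\<^sub>m b a) (1\<^sub>m b)"
  have Ic: "I \<in> carrier_mat (a + b) a" unfolding I_def by (rule carrier_append_rows, auto)
  have Pc: "P \<in> carrier_mat b (a + b)" unfolding P_def by (rule hcat_carrier, auto)
  have rD: "rdim (dsum X Y) = a + b" unfolding dsum_def a_def b_def by simp
  have aD: "ract (dsum X Y) x = bdiag (ract X x) (ract Y x)" for x unfolding dsum_def by simp
  have Iv: "I *\<^sub>v v = v @\<^sub>v 0\<^sub>v b" if v: "v \<in> carrier_vec a" for v
  proof -
    have "I *\<^sub>v v = (1\<^sub>m a *\<^sub>v v) @\<^sub>v (0\<^sub>m b a *\<^sub>v v)" unfolding I_def
      by (rule mat_mult_append[OF _ _ v], auto)
    also have "\<dots> = v @\<^sub>v 0\<^sub>v b" using v by (simp add: zero_mat_mult_vec)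
    finally show ?thesis .
  qed
  have Pv: "P *\<^sub>v (u @\<^sub>v w) = w" if u: "u \<in> carrier_vec a" and w: "w \<in> carrier_vec b" for u w
  proof -
    have "P *\<^sub>v (u @\<^sub>v w) = 0\<^sub>m b a *\<^sub>v u + 1\<^sub>m b *\<^sub>v w" unfolding P_def
      by (rule hcat_mult_vec[OF _ _ u w], auto)
    also have "\<dots> = w" using u w by (simp add: zero_mat_mult_vec)
    finally show ?thesis .
  qed
  have se: "short_exact X (dsum X Y) Y I P"
    unfolding short_exact_def
  proof (intro conjI)
    show "is_hom X (dsum X Y) I" unfolding is_hom_def rD aD
    proof (intro conjI allI)
      show "I \<in> carrier_mat (a + b) (rdim X)" using Ic a_def by simp
      fix x
      have "I * ract X x = (1\<^sub>m a * ract X x) @\<^sub>r (0\<^sub>m b a * ract X x)" unfolding I_def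
        by (rule vcat_mult[OF _ _ cX], auto)
      also have "\<dots> = (ract X x * 1\<^sub>m a) @\<^sub>r (ract Y x * 0\<^sub>m b a)"
        using left_mult_one_mat[OF cX] right_mult_one_mat[OF cX] left_mult_zero_mat[OF cX] right_mult_zero_mat[OF cY] by simp
      also have "\<dots> = bdiag (ract X x) (ract Y x) * I" unfolding I_def
        by (rule bdiag_mult_vcat[symmetric], insert cX cY, auto)
      finally show "I * ract X x = bdiag (ract X x) (ract Y x) * I" .
    qed
  next
    show "is_hom (dsum X Y) Y P" unfolding is_hom_def rD aD
    proof (intro conjI allI)
      show "P \<in> carrier_mat (rdim Y) (a + b)" using Pc b_def by simp
      fix x
      have "P * bdiag (ract X x) (ract Y x) = hcat (0\<^sub>m b a * ract X x) (1\<^sub>m b * ract Y x)" unfolding P_def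
        by (rule hcat_mult_bdiag[OF _ _ cX cY], auto)
      also have "\<dots> = hcat (ract Y x * 0\<^sub>m b a) (ract Y x * 1\<^sub>m b)"
        using left_mult_one_mat[OF cY] right_mult_one_mat[OF cY] left_mult_zero_mat[OF cX] right_mult_zero_mat[OF cY] by simp
      also have "\<dots> = ract Y x * P" unfolding P_def
        by (rule mult_hcat[symmetric, OF cY], auto)
      finally show "P * bdiag (ract X x) (ract Y x) = ract Y x * P" .
    qed
  next
    show "is_mono X (dsum X Y) I" unfolding is_mono_def rD a_def[symmetric]
    proof (intro ballI impI)
      fix v :: "'k vec" assume v: "v \<in> carrier_vec a" and z: "I *\<^sub>v v = 0\<^sub>v (a + b)"
      have "v @\<^sub>v 0\<^sub>v b = 0\<^sub>v a @\<^sub>v 0\<^sub>v b" using z Iv[OF v] zero_vec_split[of a b] by simp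
      thus "v = 0\<^sub>v a" using v by (subst (asm) append_vec_eq[of _ a], auto)
    qed
  next
    show "is_epi (dsum X Y) Y P" unfolding is_epi_def rD b_def[symmetric]
    proof
      fix w :: "'k vec" assume w: "w \<in> carrier_vec b"
      have "P *\<^sub>v (0\<^sub>v a @\<^sub>v w) = w" by (rule Pv[OF _ w], simp)
      moreover have "0\<^sub>v a @\<^sub>v w \<in> carrier_vec (a + b)" using w by simp
      ultimately show "\<exists>v\<in>carrier_vec (a + b). P *\<^sub>v v = w" by (rule bexI)
    qed
  next
    have "P * I = 0\<^sub>m b a * 1\<^sub>m a + 1\<^sub>m b * 0\<^sub>m b a" unfolding P_def I_def
      by (rule hcat_mult_vcat, auto)
    also have "\<dots> = 0\<^sub>m b a" by simp
    finally show "P * I = 0\<^sub>m (rdim Y) (rdim X)" unfolding a_def b_def .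
  next
    show "\<forall>w\<in>carrier_vec (rdim (dsum X Y)). P *\<^sub>v w = 0\<^sub>v (rdim Y) \<longrightarrow> (\<exists>v\<in>carrier_vec (rdim X). I *\<^sub>v v = w)"
      unfolding rD a_def[symmetric] b_def[symmetric]
    proof (intro ballI impI)
      fix w :: "'k vec" assume w: "w \<in> carrier_vec (a + b)" and z: "P *\<^sub>v w = 0\<^sub>v b"
      have sp: "w = vec_first w a @\<^sub>v vec_last w b" using w by simp
      have "vec_last w b = 0\<^sub>v b" using z Pv[of "vec_first w a" "vec_last w b"] sp by simp
      hence "I *\<^sub>v vec_first w a = w" using Iv[of "vec_first w a"] sp by simp
      moreover have "vec_first w a \<in> carrier_vec a" by simp
      ultimately show "\<exists>v\<in>carrier_vec a. I *\<^sub>v v = w" by (rule bexI)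
    qed
  qed
  have "is_module sc X \<and> is_module sc (dsum X Y) \<and> is_module sc Y \<and> short_exact X (dsum X Y) Y I P \<and> X \<in> S \<and> Y \<in> S"
    using X dsum_module[OF X Y] Y se XS YS by (intro conjI)
  from ext[unfolded ext_closed_def, rule_format, OF this] show ?thesis .
qed

lemma img_fact:
  fixes sc :: "'k::field \<Rightarrow> 'l::ring_1 \<Rightarrow> 'l" and X M :: "('k, 'l) rep" and F :: "'k mat"
  assumes X: "is_module sc X" and M: "is_module sc M" and F: "is_hom X M F"
  shows "\<exists>(Im :: ('k, 'l) rep) (Q :: 'k mat) (J :: 'k mat). is_module sc Im \<and> is_hom X Im Q \<and> is_epi X Im Q
     \<and> is_hom Im M J \<and> is_mono Im M J \<and> J * Q = F"
proof -
  define n where "n = rdim X"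
  define m where "m = rdim M"
  have Fc: "F \<in> carrier_mat m n" using F unfolding is_hom_def m_def n_def by simp
  have FA: "F * ract X x = ract M x * F" for x using F unfolding is_hom_def by simp
  have AX: "ract X x \<in> carrier_mat n n" for x using X unfolding is_module_def n_def by simp
  have AM: "ract M x \<in> carrier_mat m m" for x using M unfolding is_module_def m_def by simp
  have M1: "ract M 1 = 1\<^sub>m m" using M unfolding is_module_def m_def by simp
  have Mm: "ract M (x * y) = ract M x * ract M y" for x y using M unfolding is_module_def by simp
  have Ma: "ract M (x + y) = ract M x + ract M y" for x y using M unfolding is_module_def by simp
  have Ms: "ract M (sc c x) = c \<cdot>\<^sub>m ract M x" for c x using M unfolding is_module_def by simp
  from img_basis[OF Fc] obtain d and J :: "'k mat" where J: "J \<in> carrier_mat m d"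
    and mono: "\<forall>v\<in>carrier_vec d. J *\<^sub>v v = 0\<^sub>v m \<longrightarrow> v = 0\<^sub>v d"
    and img: "\<forall>u\<in>carrier_vec d. \<exists>v\<in>carrier_vec n. J *\<^sub>v u = F *\<^sub>v v"
    and img2: "\<forall>v\<in>carrier_vec n. \<exists>u\<in>carrier_vec d. F *\<^sub>v v = J *\<^sub>v u" by blast
  define coord where "coord w = (SOME u. u \<in> carrier_vec d \<and> J *\<^sub>v u = w)" for w :: "'k vec"
  have coordI: "coord w \<in> carrier_vec d \<and> J *\<^sub>v coord w = w"
    if v: "v \<in> carrier_vec n" and w: "w = F *\<^sub>v v" for v w :: "'k vec"
  proof -
    from img2 v obtain u where u: "u \<in> carrier_vec d" "F *\<^sub>v v = J *\<^sub>v u" by blast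
    hence "\<exists>u. u \<in> carrier_vec d \<and> J *\<^sub>v u = w" using w by auto
    thus ?thesis unfolding coord_def by (rule someI_ex)
  qed
  have canc: "B = C" if "B \<in> carrier_mat d k" "C \<in> carrier_mat d k" "J * B = J * C" for B C :: "'k mat" and k
    by (rule left_cancel[OF J mono that])
  define mc where "mc B k = mat d k (\<lambda>(i,j). coord (col B j) $ i)" for B :: "'k mat" and k
  have mcc: "mc B k \<in> carrier_mat d k" for B k unfolding mc_def by simp
  have mc: "J * mc B k = B"
    if B: "B \<in> carrier_mat m k" and cols: "\<forall>j<k. \<exists>v\<in>carrier_vec n. col B j = F *\<^sub>v v" for B k
  proof (rule mat_col_eqI)
    fix j assume "j < dim_col B" hence j: "j < k" using B by simp
    from cols j obtain v where v: "v \<in> carrier_vec n" "col B j = F *\<^sub>v v" by blast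
    have cd: "coord (col B j) \<in> carrier_vec d" "J *\<^sub>v coord (col B j) = col B j"
      using coordI[OF v(1) v(2)] by auto
    have "col (mc B k) j = vec d (\<lambda>i. coord (col B j) $ i)" unfolding mc_def using j by simp
    also have "\<dots> = coord (col B j)" using cd(1) by (intro eq_vecI, auto)
    finally have cm: "col (mc B k) j = coord (col B j)" .
    have "col (J * mc B k) j = J *\<^sub>v col (mc B k) j" by (rule col_mult2[OF J mcc j])
    also have "\<dots> = col B j" unfolding cm by (rule cd(2))
    finally show "col (J * mc B k) j = col B j" .
  qed (insert B J mcc, auto)
  have colF: "\<forall>j<n. \<exists>v\<in>carrier_vec n. col F j = F *\<^sub>v v"
  proof (intro allI impI)
    fix j assume j: "j < n"
    have "col F j = F *\<^sub>v unit_vec n j" by (rule col_unit[OF Fc j])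
    moreover have "unit_vec n j \<in> carrier_vec n" by simp
    ultimately show "\<exists>v\<in>carrier_vec n. col F j = F *\<^sub>v v" by (rule bexI)
  qed
  have colAJ: "\<forall>j<d. \<exists>v\<in>carrier_vec n. col (ract M x * J) j = F *\<^sub>v v" for x
  proof (intro allI impI)
    fix j assume j: "j < d"
    from img obtain v where v: "v \<in> carrier_vec n" "J *\<^sub>v unit_vec d j = F *\<^sub>v v"
      using unit_vec_carrier by blast
    have "col (ract M x * J) j = ract M x *\<^sub>v col J j" by (rule col_mult2[OF AM J j])
    also have "col J j = F *\<^sub>v v" using col_unit[OF J j] v(2) by simp
    also have "ract M x *\<^sub>v (F *\<^sub>v v) = (ract M x * F) *\<^sub>v v" by (rule assoc_mult_mat_vec[symmetric, OF AM Fc v(1)])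
    also have "ract M x * F = F * ract X x" by (rule FA[symmetric])
    also have "(F * ract X x) *\<^sub>v v = F *\<^sub>v (ract X x *\<^sub>v v)" by (rule assoc_mult_mat_vec[OF Fc AX v(1)])
    finally have "col (ract M x * J) j = F *\<^sub>v (ract X x *\<^sub>v v)" .
    moreover have "ract X x *\<^sub>v v \<in> carrier_vec n" using AX[of x] v(1) by simp
    ultimately show "\<exists>v\<in>carrier_vec n. col (ract M x * J) j = F *\<^sub>v v" by (rule bexI)
  qed
  define A' where "A' x = mc (ract M x * J) d" for x
  have A'c: "A' x \<in> carrier_mat d d" for x unfolding A'_def by (rule mcc)
  have JA': "J * A' x = ract M x * J" for x unfolding A'_def
    by (rule mc[OF mult_carrier_mat[OF AM J] colAJ])
  define Q where "Q = mc F n"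
  have Qc: "Q \<in> carrier_mat d n" unfolding Q_def by (rule mcc)
  have JQ: "J * Q = F" unfolding Q_def by (rule mc[OF Fc colF])
  define Im :: "('k, 'l) rep" where "Im = (d, A')"
  have modIm: "is_module sc Im" unfolding is_module_def Im_def fst_conv snd_conv
  proof (intro conjI allI)
    fix x show "A' x \<in> carrier_mat d d" by (rule A'c)
  next
    show "A' 1 = 1\<^sub>m d"
    proof (rule canc[OF A'c one_carrier_mat])
      have "J * A' 1 = ract M 1 * J" by (rule JA')
      also have "\<dots> = J" unfolding M1 by (rule left_mult_one_mat[OF J])
      also have "\<dots> = J * 1\<^sub>m d" by (rule right_mult_one_mat[OF J, symmetric])
      finally show "J * A' 1 = J * 1\<^sub>m d" .
    qed
  next
    fix x y show "A' (x * y) = A' x * A' y"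
    proof (rule canc[OF A'c mult_carrier_mat[OF A'c A'c]])
      have "J * A' (x * y) = ract M (x * y) * J" by (rule JA')
      also have "\<dots> = ract M x * (ract M y * J)" unfolding Mm by (rule assoc_mult_mat[OF AM AM J])
      also have "\<dots> = ract M x * (J * A' y)" unfolding JA' ..
      also have "\<dots> = (ract M x * J) * A' y" by (rule assoc_mult_mat[OF AM J A'c, symmetric])
      also have "\<dots> = (J * A' x) * A' y" unfolding JA' ..
      also have "\<dots> = J * (A' x * A' y)" by (rule assoc_mult_mat[OF J A'c A'c])
      finally show "J * A' (x * y) = J * (A' x * A' y)" .
    qed
  next
    fix x y show "A' (x + y) = A' x + A' y"
    proof (rule canc[OF A'c add_carrier_mat[OF A'c]])
      have "J * A' (x + y) = ract M (x + y) * J" by (rule JA')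
      also have "\<dots> = ract M x * J + ract M y * J" unfolding Ma by (rule add_mult_distrib_mat[OF AM AM J])
      also have "\<dots> = J * A' x + J * A' y" unfolding JA' ..
      also have "\<dots> = J * (A' x + A' y)" by (rule mult_add_distrib_mat[OF J A'c A'c, symmetric])
      finally show "J * A' (x + y) = J * (A' x + A' y)" .
    qed
  next
    fix c x show "A' (sc c x) = c \<cdot>\<^sub>m A' x"
    proof (rule canc[OF A'c smult_carrier_mat[OF A'c]])
      have "J * A' (sc c x) = ract M (sc c x) * J" by (rule JA')
      also have "\<dots> = c \<cdot>\<^sub>m (ract M x * J)" unfolding Ms by (rule mult_smult_assoc_mat[OF AM J])
      also have "\<dots> = c \<cdot>\<^sub>m (J * A' x)" unfolding JA' ..
      also have "\<dots> = J * (c \<cdot>\<^sub>m A' x)" by (rule mult_smult_distrib[OF J A'c, symmetric])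
      finally show "J * A' (sc c x) = J * (c \<cdot>\<^sub>m A' x)" .
    qed
  qed
  have homQ: "is_hom X Im Q" unfolding is_hom_def Im_def fst_conv snd_conv n_def[symmetric]
  proof (intro conjI allI)
    show "Q \<in> carrier_mat d n" by (rule Qc)
    fix x show "Q * ract X x = A' x * Q"
    proof (rule canc[OF mult_carrier_mat[OF Qc AX] mult_carrier_mat[OF A'c Qc]])
      have "J * (Q * ract X x) = (J * Q) * ract X x" by (rule assoc_mult_mat[OF J Qc AX, symmetric])
      also have "\<dots> = ract M x * F" unfolding JQ by (rule FA)
      also have "\<dots> = ract M x * (J * Q)" unfolding JQ ..
      also have "\<dots> = (ract M x * J) * Q" by (rule assoc_mult_mat[OF AM J Qc, symmetric])
      also have "\<dots> = (J * A' x) * Q" unfolding JA' ..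
      also have "\<dots> = J * (A' x * Q)" by (rule assoc_mult_mat[OF J A'c Qc])
      finally show "J * (Q * ract X x) = J * (A' x * Q)" .
    qed
  qed
  have epiQ: "is_epi X Im Q" unfolding is_epi_def Im_def fst_conv n_def[symmetric]
  proof
    fix w :: "'k vec" assume w: "w \<in> carrier_vec d"
    from img w obtain v where v: "v \<in> carrier_vec n" "J *\<^sub>v w = F *\<^sub>v v" by blast
    have "J *\<^sub>v w = J *\<^sub>v (Q *\<^sub>v v)" unfolding v(2) JQ[symmetric] by (rule assoc_mult_mat_vec[OF J Qc v(1)])
    moreover have Qv: "Q *\<^sub>v v \<in> carrier_vec d" using Qc v(1) by simp
    ultimately have "w = Q *\<^sub>v v" using mono_inj[OF J mono w Qv] by blast
    hence "Q *\<^sub>v v = w" by simp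
    with v(1) show "\<exists>v\<in>carrier_vec n. Q *\<^sub>v v = w" by (rule rev_bexI)
  qed
  have homJ: "is_hom Im M J" unfolding is_hom_def Im_def fst_conv snd_conv m_def[symmetric]
    using J JA' by simp
  have monoJ: "is_mono Im M J" unfolding is_mono_def Im_def fst_conv m_def[symmetric]
    using mono .
  show ?thesis using modIm homQ epiQ homJ monoJ JQ by blast
qed

lemma right_cancel:
  fixes G :: "'a :: field mat"
  assumes G: "G \<in> carrier_mat a n" and epi: "\<forall>w\<in>carrier_vec a. \<exists>v\<in>carrier_vec n. G *\<^sub>v v = w"
    and B: "B \<in> carrier_mat k a" and C: "C \<in> carrier_mat k a" and eq: "B * G = C * G"
  shows "B = C"
proof -
  from right_inv[OF G epi] obtain R where R: "R \<in> carrier_mat n a" "G * R = 1\<^sub>m a" by blast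
  have "B = B * (G * R)" unfolding R(2) by (rule right_mult_one_mat[OF B, symmetric])
  also have "\<dots> = (B * G) * R" by (rule assoc_mult_mat[OF B G R(1), symmetric])
  also have "\<dots> = (C * G) * R" unfolding eq ..
  also have "\<dots> = C * (G * R)" by (rule assoc_mult_mat[OF C G R(1)])
  also have "\<dots> = C" unfolding R(2) by (rule right_mult_one_mat[OF C])
  finally show ?thesis .
qed

lemma serreD:
  assumes "serre_subcat sc S"
  shows "S \<noteq> {}" "\<And>M. M \<in> S \<Longrightarrow> is_module sc M" "ext_closed sc S" "sub_closed sc S" "quot_closed sc S"
  using assms unfolding serre_subcat_def subcat_def by auto

lemma zmod_in:
  fixes sc :: "'k::field \<Rightarrow> 'l::ring_1 \<Rightarrow> 'l" and S :: "('k, 'l) subcat"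
  assumes ser: "serre_subcat sc S"
  shows "zmod \<in> S"
proof -
  from serreD(1)[OF ser] obtain Y where Y: "Y \<in> S" by blast
  define F :: "'k mat" where "F = 0\<^sub>m (rdim Y) 0"
  have AY: "ract Y x \<in> carrier_mat (rdim Y) (rdim Y)" for x
    using serreD(2)[OF ser Y] unfolding is_module_def by simp
  have hom: "is_hom zmod Y F" unfolding is_hom_def zmod_def F_def fst_conv snd_conv
  proof (intro conjI allI)
    show "0\<^sub>m (rdim Y) 0 \<in> carrier_mat (rdim Y) 0" by simp
    fix x show "0\<^sub>m (rdim Y) 0 * 1\<^sub>m 0 = ract Y x * (0\<^sub>m (rdim Y) 0 :: 'k mat)"
      using AY[of x] by (intro eq_matI, auto)
  qed
  have mono: "is_mono zmod Y F" unfolding is_mono_def zmod_def fst_conv using cv0_zero by blast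
  from serreD(4)[OF ser, unfolded sub_closed_def, rule_format, of zmod Y F]
  show ?thesis using zmod_module hom mono Y by blast
qed

lemma right_approx:
  fixes sc :: "'k::field \<Rightarrow> 'l::ring_1 \<Rightarrow> 'l" and S :: "('k, 'l) subcat" and M :: "('k, 'l) rep"
  assumes ser: "serre_subcat sc S" and M: "is_module sc M"
  shows "has_right_approx S M"
proof -
  note modS = serreD(2)[OF ser]
  note ext = serreD(3)[OF ser]
  note quot = serreD(5)[OF ser, unfolded quot_closed_def, rule_format]
  define n where "n = rdim M"
  have AM: "ract M x \<in> carrier_mat n n" for x using M unfolding is_module_def n_def by simp
  define P where "P a \<longleftrightarrow> (\<exists>(T0 :: ('k, 'l) rep) (G :: 'k mat). T0 \<in> S \<and> is_hom T0 M G \<and> is_mono T0 M G \<and> rdim T0 = a)" for a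
  have P0: "P 0" unfolding P_def
  proof (intro exI conjI)
    show "zmod \<in> S" by (rule zmod_in[OF ser])
    show "is_hom zmod M (0\<^sub>m n 0)" unfolding is_hom_def zmod_def fst_conv snd_conv n_def[symmetric]
    proof (intro conjI allI)
      show "0\<^sub>m n 0 \<in> carrier_mat n 0" by simp
      fix x show "0\<^sub>m n 0 * 1\<^sub>m 0 = ract M x * (0\<^sub>m n 0 :: 'k mat)"
        using AM[of x] by (intro eq_matI, auto)
    qed
    show "is_mono zmod M (0\<^sub>m n 0)" unfolding is_mono_def zmod_def fst_conv using cv0_zero by blast
    show "rdim (zmod :: ('k, 'l) rep) = 0" unfolding zmod_def by simp
  qed
  have Pb: "a \<le> n" if "P a" for a
  proof -
    from that obtain T0 :: "('k, 'l) rep" and G :: "'k mat" where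
      h: "is_hom T0 M G" and mo: "is_mono T0 M G" and r: "rdim T0 = a" unfolding P_def by blast
    have Gc: "G \<in> carrier_mat n a" using h r unfolding is_hom_def n_def by simp
    show ?thesis by (rule mono_le[OF Gc], insert mo r, unfold is_mono_def n_def, simp)
  qed
  have fin: "finite {a. P a}"
  proof (rule finite_subset)
    show "{a. P a} \<subseteq> {..n}" using Pb by blast
  qed simp
  define a where "a = Max {a. P a}"
  have "a \<in> {a. P a}" unfolding a_def using fin P0 by (intro Max_in) auto
  hence "P a" by simp
  then obtain T0 :: "('k, 'l) rep" and G :: "'k mat" where T0: "T0 \<in> S" and homG: "is_hom T0 M G"
    and monoG: "is_mono T0 M G" and ra: "rdim T0 = a" unfolding P_def by blast
  have maxa: "c \<le> a" if "P c" for c unfolding a_def using fin that by (intro Max_ge) auto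
  have T0m: "is_module sc T0" by (rule modS[OF T0])
  have A0: "ract T0 x \<in> carrier_mat a a" for x using T0m ra unfolding is_module_def by simp
  have Gc: "G \<in> carrier_mat n a" using homG ra unfolding is_hom_def n_def by simp
  have GA: "G * ract T0 x = ract M x * G" for x using homG unfolding is_hom_def by simp
  have Gmono: "\<forall>v\<in>carrier_vec a. G *\<^sub>v v = 0\<^sub>v n \<longrightarrow> v = 0\<^sub>v a" using monoG ra unfolding is_mono_def n_def by simp
  show ?thesis unfolding has_right_approx_def
  proof (rule exI[of _ T0], rule exI[of _ G], intro conjI allI impI)
    show "T0 \<in> S" by (rule T0)
    show "is_hom T0 M G" by (rule homG)
    fix T1 :: "('k, 'l) rep" and H :: "'k mat" assume "T1 \<in> S \<and> is_hom T1 M H"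
    hence T1: "T1 \<in> S" and homH: "is_hom T1 M H" by auto
    define b where "b = rdim T1"
    have T1m: "is_module sc T1" by (rule modS[OF T1])
    have A1: "ract T1 x \<in> carrier_mat b b" for x using T1m unfolding is_module_def b_def by simp
    have Hc: "H \<in> carrier_mat n b" using homH unfolding is_hom_def n_def b_def by simp
    have HA: "H * ract T1 x = ract M x * H" for x using homH unfolding is_hom_def by simp
    define D where "D = dsum T0 T1"
    have DS: "D \<in> S" unfolding D_def by (rule dsum_in[OF ext T0m T1m T0 T1])
    have Dm: "is_module sc D" unfolding D_def by (rule dsum_module[OF T0m T1m])
    have rD: "rdim D = a + b" unfolding D_def dsum_def ra[symmetric] b_def by simp
    have aD: "ract D x = bdiag (ract T0 x) (ract T1 x)" for x unfolding D_def dsum_def by simp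
    define K where "K = hcat G H"
    have Kc: "K \<in> carrier_mat n (a + b)" unfolding K_def by (rule hcat_carrier[OF Gc Hc])
    have homK: "is_hom D M K" unfolding is_hom_def rD aD n_def[symmetric]
    proof (intro conjI allI)
      show "K \<in> carrier_mat n (a + b)" by (rule Kc)
      fix x
      have "K * bdiag (ract T0 x) (ract T1 x) = hcat (G * ract T0 x) (H * ract T1 x)"
        unfolding K_def by (rule hcat_mult_bdiag[OF Gc Hc A0 A1])
      also have "\<dots> = hcat (ract M x * G) (ract M x * H)" unfolding GA HA ..
      also have "\<dots> = ract M x * K" unfolding K_def by (rule mult_hcat[symmetric, OF AM Gc Hc])
      finally show "K * bdiag (ract T0 x) (ract T1 x) = ract M x * K" .
    qed
    from img_fact[OF Dm M homK] obtain Im :: "('k, 'l) rep" and Q J :: "'k mat" where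
      Imm: "is_module sc Im" and homQ: "is_hom D Im Q" and epiQ: "is_epi D Im Q"
      and homJ: "is_hom Im M J" and monoJ: "is_mono Im M J" and JQ: "J * Q = K" by blast
    have ImS: "Im \<in> S" using quot[of Im D Q] Imm DS homQ epiQ by blast
    have "P (rdim Im)" unfolding P_def using ImS homJ monoJ by blast
    hence cle: "rdim Im \<le> a" by (rule maxa)
    define c where "c = rdim Im"
    have Qc: "Q \<in> carrier_mat c (a + b)" using homQ rD unfolding is_hom_def c_def by simp
    have Jc: "J \<in> carrier_mat n c" using homJ unfolding is_hom_def c_def n_def by simp
    define I0 :: "'k mat" where "I0 = 1\<^sub>m a @\<^sub>r 0\<^sub>m b a"
    define I1 :: "'k mat" where "I1 = 0\<^sub>m a b @\<^sub>r 1\<^sub>m b"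
    have I0c: "I0 \<in> carrier_mat (a + b) a" unfolding I0_def by (rule carrier_append_rows, auto)
    have I1c: "I1 \<in> carrier_mat (a + b) b" unfolding I1_def by (rule carrier_append_rows, auto)
    have KI0: "K * I0 = G"
    proof -
      have "K * I0 = G * 1\<^sub>m a + H * 0\<^sub>m b a" unfolding K_def I0_def by (rule hcat_mult_vcat[OF Gc Hc], auto)
      also have "\<dots> = G" using right_mult_one_mat[OF Gc] right_mult_zero_mat[OF Hc, of a] Gc by simp
      finally show ?thesis .
    qed
    have KI1: "K * I1 = H"
    proof -
      have "K * I1 = G * 0\<^sub>m a b + H * 1\<^sub>m b" unfolding K_def I1_def by (rule hcat_mult_vcat[OF Gc Hc], auto)
      also have "\<dots> = H" using right_mult_one_mat[OF Hc] right_mult_zero_mat[OF Gc, of b] Hc by simp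
      finally show ?thesis .
    qed
    define Q0 where "Q0 = Q * I0"
    define Q1 where "Q1 = Q * I1"
    have Q0c: "Q0 \<in> carrier_mat c a" unfolding Q0_def using Qc I0c by simp
    have Q1c: "Q1 \<in> carrier_mat c b" unfolding Q1_def using Qc I1c by simp
    have JQ0: "J * Q0 = G" unfolding Q0_def using assoc_mult_mat[OF Jc Qc I0c] JQ KI0 by simp
    have JQ1: "J * Q1 = H" unfolding Q1_def using assoc_mult_mat[OF Jc Qc I1c] JQ KI1 by simp
    have Q0mono: "\<forall>v\<in>carrier_vec a. Q0 *\<^sub>v v = 0\<^sub>v c \<longrightarrow> v = 0\<^sub>v a"
    proof (intro ballI impI)
      fix v :: "'k vec" assume v: "v \<in> carrier_vec a" and z: "Q0 *\<^sub>v v = 0\<^sub>v c"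
      have "G *\<^sub>v v = J *\<^sub>v (Q0 *\<^sub>v v)" unfolding JQ0[symmetric] by (rule assoc_mult_mat_vec[OF Jc Q0c v])
      also have "\<dots> = 0\<^sub>v n" unfolding z by (rule mat_mult_zero_vec[OF Jc])
      finally show "v = 0\<^sub>v a" using Gmono v by blast
    qed
    have "a \<le> c" by (rule mono_le[OF Q0c Q0mono])
    hence ca: "c = a" using cle c_def by simp
    have Q0c': "Q0 \<in> carrier_mat a a" using Q0c ca by simp
    have Q1c': "Q1 \<in> carrier_mat a b" using Q1c ca by simp
    from mono_sq_inv[OF Q0c' Q0mono[unfolded ca]] obtain V where
      V: "V \<in> carrier_mat a a" "Q0 * V = 1\<^sub>m a" "V * Q0 = 1\<^sub>m a" by blast
    define U where "U = V * Q1"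
    have Uc: "U \<in> carrier_mat a b" unfolding U_def using V(1) Q1c' by simp
    have GU: "G * U = H"
    proof -
      have "G * U = (J * Q0) * (V * Q1)" unfolding U_def JQ0 ..
      also have "\<dots> = J * (Q0 * (V * Q1))" using Jc Q0c' V(1) Q1c' ca by (subst assoc_mult_mat[of J n a], auto)
      also have "Q0 * (V * Q1) = (Q0 * V) * Q1" by (rule assoc_mult_mat[OF Q0c' V(1) Q1c', symmetric])
      also have "\<dots> = Q1" unfolding V(2) by (rule left_mult_one_mat[OF Q1c'])
      finally show ?thesis using JQ1 by simp
    qed
    show "\<exists>U. is_hom T1 T0 U \<and> G * U = H"
    proof (intro exI conjI)
      show "G * U = H" by (rule GU)
      show "is_hom T1 T0 U" unfolding is_hom_def ra b_def[symmetric]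
      proof (intro conjI allI)
        show "U \<in> carrier_mat a b" by (rule Uc)
        fix x
        show "U * ract T1 x = ract T0 x * U"
        proof (rule left_cancel[OF Gc Gmono mult_carrier_mat[OF Uc A1] mult_carrier_mat[OF A0 Uc]])
          have "G * (U * ract T1 x) = (G * U) * ract T1 x" by (rule assoc_mult_mat[OF Gc Uc A1, symmetric])
          also have "\<dots> = ract M x * H" unfolding GU by (rule HA)
          also have "\<dots> = ract M x * (G * U)" unfolding GU ..
          also have "\<dots> = (ract M x * G) * U" by (rule assoc_mult_mat[OF AM Gc Uc, symmetric])
          also have "\<dots> = (G * ract T0 x) * U" unfolding GA ..
          also have "\<dots> = G * (ract T0 x * U)" by (rule assoc_mult_mat[OF Gc A0 Uc])
          finally show "G * (U * ract T1 x) = G * (ract T0 x * U)" .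
        qed
      qed
    qed
  qed
qed

lemma left_approx:
  fixes sc :: "'k::field \<Rightarrow> 'l::ring_1 \<Rightarrow> 'l" and S :: "('k, 'l) subcat" and M :: "('k, 'l) rep"
  assumes ser: "serre_subcat sc S" and M: "is_module sc M"
  shows "has_left_approx S M"
proof -
  note modS = serreD(2)[OF ser]
  note ext = serreD(3)[OF ser]
  note sub = serreD(4)[OF ser, unfolded sub_closed_def, rule_format]
  define n where "n = rdim M"
  have AM: "ract M x \<in> carrier_mat n n" for x using M unfolding is_module_def n_def by simp
  define P where "P a \<longleftrightarrow> (\<exists>(T0 :: ('k, 'l) rep) (G :: 'k mat). T0 \<in> S \<and> is_hom M T0 G \<and> is_epi M T0 G \<and> rdim T0 = a)" for a
  have P0: "P 0" unfolding P_def
  proof (intro exI conjI)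
    show "zmod \<in> S" by (rule zmod_in[OF ser])
    show "is_hom M zmod (0\<^sub>m 0 n)" unfolding is_hom_def zmod_def fst_conv snd_conv n_def[symmetric]
    proof (intro conjI allI)
      show "0\<^sub>m 0 n \<in> carrier_mat 0 n" by simp
      fix x show "0\<^sub>m 0 n * ract M x = 1\<^sub>m 0 * (0\<^sub>m 0 n :: 'k mat)"
        using AM[of x] by (intro eq_matI, auto)
    qed
    show "is_epi M zmod (0\<^sub>m 0 n)" unfolding is_epi_def zmod_def fst_conv n_def[symmetric]
    proof
      fix w :: "'k vec" assume w: "w \<in> carrier_vec 0"
      have "0\<^sub>m 0 n *\<^sub>v 0\<^sub>v n = w" using cv0_zero[OF w] mat_mult_zero_vec[of "0\<^sub>m 0 n :: 'k mat" 0 n] by simp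
      moreover have "0\<^sub>v n \<in> carrier_vec n" by simp
      ultimately show "\<exists>v\<in>carrier_vec n. 0\<^sub>m 0 n *\<^sub>v v = w" by (rule bexI)
    qed
    show "rdim (zmod :: ('k, 'l) rep) = 0" unfolding zmod_def by simp
  qed
  have Pb: "a \<le> n" if "P a" for a
  proof -
    from that obtain T0 :: "('k, 'l) rep" and G :: "'k mat" where
      h: "is_hom M T0 G" and ep: "is_epi M T0 G" and r: "rdim T0 = a" unfolding P_def by blast
    have Gc: "G \<in> carrier_mat a n" using h r unfolding is_hom_def n_def by simp
    show ?thesis by (rule epi_le[OF Gc], insert ep r, unfold is_epi_def n_def, simp)
  qed
  have fin: "finite {a. P a}"
  proof (rule finite_subset)
    show "{a. P a} \<subseteq> {..n}" using Pb by blast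
  qed simp
  define a where "a = Max {a. P a}"
  have "a \<in> {a. P a}" unfolding a_def using fin P0 by (intro Max_in) auto
  hence "P a" by simp
  then obtain T0 :: "('k, 'l) rep" and G :: "'k mat" where T0: "T0 \<in> S" and homG: "is_hom M T0 G"
    and epiG: "is_epi M T0 G" and ra: "rdim T0 = a" unfolding P_def by blast
  have maxa: "c \<le> a" if "P c" for c unfolding a_def using fin that by (intro Max_ge) auto
  have T0m: "is_module sc T0" by (rule modS[OF T0])
  have A0: "ract T0 x \<in> carrier_mat a a" for x using T0m ra unfolding is_module_def by simp
  have Gc: "G \<in> carrier_mat a n" using homG ra unfolding is_hom_def n_def by simp
  have GA: "G * ract M x = ract T0 x * G" for x using homG unfolding is_hom_def by simp
  have Gepi: "\<forall>w\<in>carrier_vec a. \<exists>v\<in>carrier_vec n. G *\<^sub>v v = w" using epiG ra unfolding is_epi_def n_def by simp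
  show ?thesis unfolding has_left_approx_def
  proof (rule exI[of _ T0], rule exI[of _ G], intro conjI allI impI)
    show "T0 \<in> S" by (rule T0)
    show "is_hom M T0 G" by (rule homG)
    fix T1 :: "('k, 'l) rep" and H :: "'k mat" assume "T1 \<in> S \<and> is_hom M T1 H"
    hence T1: "T1 \<in> S" and homH: "is_hom M T1 H" by auto
    define b where "b = rdim T1"
    have T1m: "is_module sc T1" by (rule modS[OF T1])
    have A1: "ract T1 x \<in> carrier_mat b b" for x using T1m unfolding is_module_def b_def by simp
    have Hc: "H \<in> carrier_mat b n" using homH unfolding is_hom_def n_def b_def by simp
    have HA: "H * ract M x = ract T1 x * H" for x using homH unfolding is_hom_def by simp
    define D where "D = dsum T0 T1"
    have DS: "D \<in> S" unfolding D_def by (rule dsum_in[OF ext T0m T1m T0 T1])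
    have Dm: "is_module sc D" unfolding D_def by (rule dsum_module[OF T0m T1m])
    have rD: "rdim D = a + b" unfolding D_def dsum_def ra[symmetric] b_def by simp
    have aD: "ract D x = bdiag (ract T0 x) (ract T1 x)" for x unfolding D_def dsum_def by simp
    define K where "K = G @\<^sub>r H"
    have Kc: "K \<in> carrier_mat (a + b) n" unfolding K_def by (rule carrier_append_rows[OF Gc Hc])
    have homK: "is_hom M D K" unfolding is_hom_def rD aD n_def[symmetric]
    proof (intro conjI allI)
      show "K \<in> carrier_mat (a + b) n" by (rule Kc)
      fix x
      have "K * ract M x = (G * ract M x) @\<^sub>r (H * ract M x)"
        unfolding K_def by (rule vcat_mult[OF Gc Hc AM])
      also have "\<dots> = (ract T0 x * G) @\<^sub>r (ract T1 x * H)" unfolding GA HA ..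
      also have "\<dots> = bdiag (ract T0 x) (ract T1 x) * K" unfolding K_def
        by (rule bdiag_mult_vcat[symmetric, OF Gc Hc A0 A1])
      finally show "K * ract M x = bdiag (ract T0 x) (ract T1 x) * K" .
    qed
    from img_fact[OF M Dm homK] obtain Im :: "('k, 'l) rep" and Q J :: "'k mat" where
      Imm: "is_module sc Im" and homQ: "is_hom M Im Q" and epiQ: "is_epi M Im Q"
      and homJ: "is_hom Im D J" and monoJ: "is_mono Im D J" and JQ: "J * Q = K" by blast
    have ImS: "Im \<in> S" using sub[of Im D J] Imm DS homJ monoJ by blast
    have "P (rdim Im)" unfolding P_def using ImS homQ epiQ by blast
    hence cle: "rdim Im \<le> a" by (rule maxa)
    define c where "c = rdim Im"
    have Qc: "Q \<in> carrier_mat c n" using homQ unfolding is_hom_def c_def n_def by simp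
    have Jc: "J \<in> carrier_mat (a + b) c" using homJ rD unfolding is_hom_def c_def by simp
    define P0 :: "'k mat" where "P0 = hcat (1\<^sub>m a) (0\<^sub>m a b)"
    define P1 :: "'k mat" where "P1 = hcat (0\<^sub>m b a) (1\<^sub>m b)"
    have P0c: "P0 \<in> carrier_mat a (a + b)" unfolding P0_def by (rule hcat_carrier, auto)
    have P1c: "P1 \<in> carrier_mat b (a + b)" unfolding P1_def by (rule hcat_carrier, auto)
    have P0K: "P0 * K = G"
    proof -
      have "P0 * K = 1\<^sub>m a * G + 0\<^sub>m a b * H" unfolding K_def P0_def by (rule hcat_mult_vcat[OF _ _ Gc Hc], auto)
      also have "\<dots> = G" using left_mult_one_mat[OF Gc] left_mult_zero_mat[OF Hc, of a] Gc by simp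
      finally show ?thesis .
    qed
    have P1K: "P1 * K = H"
    proof -
      have "P1 * K = 0\<^sub>m b a * G + 1\<^sub>m b * H" unfolding K_def P1_def by (rule hcat_mult_vcat[OF _ _ Gc Hc], auto)
      also have "\<dots> = H" using left_mult_one_mat[OF Hc] left_mult_zero_mat[OF Gc, of b] Hc by simp
      finally show ?thesis .
    qed
    define R0 where "R0 = P0 * J"
    define R1 where "R1 = P1 * J"
    have R0c: "R0 \<in> carrier_mat a c" unfolding R0_def using P0c Jc by simp
    have R1c: "R1 \<in> carrier_mat b c" unfolding R1_def using P1c Jc by simp
    have R0Q: "R0 * Q = G" unfolding R0_def using assoc_mult_mat[OF P0c Jc Qc] JQ P0K by simp
    have R1Q: "R1 * Q = H" unfolding R1_def using assoc_mult_mat[OF P1c Jc Qc] JQ P1K by simp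
    have R0epi: "\<forall>w\<in>carrier_vec a. \<exists>v\<in>carrier_vec c. R0 *\<^sub>v v = w"
    proof
      fix w :: "'k vec" assume w: "w \<in> carrier_vec a"
      from Gepi w obtain v where v: "v \<in> carrier_vec n" "G *\<^sub>v v = w" by blast
      have "R0 *\<^sub>v (Q *\<^sub>v v) = G *\<^sub>v v" unfolding R0Q[symmetric] by (rule assoc_mult_mat_vec[OF R0c Qc v(1), symmetric])
      hence "R0 *\<^sub>v (Q *\<^sub>v v) = w" using v(2) by simp
      moreover have "Q *\<^sub>v v \<in> carrier_vec c" using Qc v(1) by simp
      ultimately show "\<exists>v\<in>carrier_vec c. R0 *\<^sub>v v = w" by (rule bexI)
    qed
    have "a \<le> c" by (rule epi_le[OF R0c R0epi])
    hence ca: "c = a" using cle c_def by simp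
    have R0c': "R0 \<in> carrier_mat a a" using R0c ca by simp
    have R1c': "R1 \<in> carrier_mat b a" using R1c ca by simp
    have Qc': "Q \<in> carrier_mat a n" using Qc ca by simp
    from epi_sq_inv[OF R0c' R0epi[unfolded ca]] obtain V where
      V: "V \<in> carrier_mat a a" "R0 * V = 1\<^sub>m a" "V * R0 = 1\<^sub>m a" by blast
    define U where "U = R1 * V"
    have Uc: "U \<in> carrier_mat b a" unfolding U_def using V(1) R1c' by simp
    have UG: "U * G = H"
    proof -
      have "U * G = (R1 * V) * (R0 * Q)" unfolding U_def R0Q ..
      also have "\<dots> = R1 * (V * (R0 * Q))" by (rule assoc_mult_mat[OF R1c' V(1) mult_carrier_mat[OF R0c' Qc']])
      also have "V * (R0 * Q) = (V * R0) * Q" by (rule assoc_mult_mat[OF V(1) R0c' Qc', symmetric])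
      also have "\<dots> = Q" unfolding V(3) by (rule left_mult_one_mat[OF Qc'])
      finally show ?thesis using R1Q by simp
    qed
    show "\<exists>U. is_hom T0 T1 U \<and> U * G = H"
    proof (intro exI conjI)
      show "U * G = H" by (rule UG)
      show "is_hom T0 T1 U" unfolding is_hom_def ra b_def[symmetric]
      proof (intro conjI allI)
        show "U \<in> carrier_mat b a" by (rule Uc)
        fix x
        show "U * ract T0 x = ract T1 x * U"
        proof (rule right_cancel[OF Gc Gepi mult_carrier_mat[OF Uc A0] mult_carrier_mat[OF A1 Uc]])
          have "(U * ract T0 x) * G = U * (ract T0 x * G)" by (rule assoc_mult_mat[OF Uc A0 Gc])
          also have "\<dots> = U * (G * ract M x)" unfolding GA ..
          also have "\<dots> = (U * G) * ract M x" by (rule assoc_mult_mat[OF Uc Gc AM, symmetric])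
          also have "\<dots> = ract T1 x * H" unfolding UG by (rule HA)
          also have "\<dots> = ract T1 x * (U * G)" unfolding UG ..
          also have "\<dots> = (ract T1 x * U) * G" by (rule assoc_mult_mat[OF A1 Uc Gc, symmetric])
          finally show "(U * ract T0 x) * G = (ract T1 x * U) * G" .
        qed
      qed
    qed
  qed
qed

theorem corollary3p8:
  fixes sc :: "'k::field \<Rightarrow> 'l::ring_1 \<Rightarrow> 'l"
    and S :: "('k, 'l) subcat"
  assumes "fd_algebra sc"
    and "basic_algebra TYPE('l)"
    and "serre_subcat sc S"
  shows "left_finite_wide sc S \<and> right_finite_wide sc S"
proof -
  note ser = assms(3)
  have subc: "subcat sc S" using ser unfolding serre_subcat_def by simp
  note ext = serreD(3)[OF ser]
  note sub = serreD(4)[OF ser, unfolded sub_closed_def, rule_format]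
  note quot = serreD(5)[OF ser, unfolded quot_closed_def, rule_format]
  have kerc: "ker_closed sc S" unfolding ker_closed_def
  proof (intro allI impI)
    fix X Y :: "('k, 'l) rep" and F I :: "'k mat" and K :: "('k, 'l) rep"
    assume h: "X \<in> S \<and> Y \<in> S \<and> is_hom X Y F \<and> is_module sc K \<and> is_kernel X Y F K I"
    hence "is_hom K X I" "is_mono K X I" unfolding is_kernel_def by auto
    thus "K \<in> S" using sub[of K X I] h by blast
  qed
  have cokc: "coker_closed sc S" unfolding coker_closed_def
  proof (intro allI impI)
    fix X Y :: "('k, 'l) rep" and F P :: "'k mat" and C :: "('k, 'l) rep"
    assume h: "X \<in> S \<and> Y \<in> S \<and> is_hom X Y F \<and> is_module sc C \<and> is_cokernel X Y F C P"
    hence "is_hom Y C P" "is_epi Y C P" unfolding is_cokernel_def by auto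
    thus "C \<in> S" using quot[of C Y P] h by blast
  qed
  have wide: "wide_subcat sc S" unfolding wide_subcat_def using subc ext kerc cokc by blast
  have ff: "functorially_finite sc S" unfolding functorially_finite_def
    using left_approx[OF ser] right_approx[OF ser] by blast
  have tc: "torsion_class sc S" unfolding torsion_class_def using subc ext serreD(5)[OF ser] by blast
  have tfc: "torsionfree_class sc S" unfolding torsionfree_class_def using subc ext serreD(4)[OF ser] by blast
  have WL: "S = W_L sc S"
  proof
    show "W_L sc S \<subseteq> S" unfolding W_L_def by blast
    show "S \<subseteq> W_L sc S"
    proof
      fix X :: "('k, 'l) rep" assume X: "X \<in> S"
      have "\<forall>Y F. Y \<in> S \<and> is_hom Y X F \<longrightarrow> (\<forall>K I. is_module sc K \<and> is_kernel Y X F K I \<longrightarrow> K \<in> S)"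
      proof (intro allI impI)
        fix Y :: "('k, 'l) rep" and F :: "'k mat" and K :: "('k, 'l) rep" and I :: "'k mat"
        assume h1: "Y \<in> S \<and> is_hom Y X F" and h2: "is_module sc K \<and> is_kernel Y X F K I"
        hence "is_hom K Y I" "is_mono K Y I" unfolding is_kernel_def by auto
        thus "K \<in> S" using sub[of K Y I] h1 h2 by blast
      qed
      thus "X \<in> W_L sc S" unfolding W_L_def using X by blast
    qed
  qed
  have WR: "S = W_R sc S"
  proof
    show "W_R sc S \<subseteq> S" unfolding W_R_def by blast
    show "S \<subseteq> W_R sc S"
    proof
      fix X :: "('k, 'l) rep" assume X: "X \<in> S"
      have "\<forall>Y G. Y \<in> S \<and> is_hom X Y G \<longrightarrow> (\<forall>C P. is_module sc C \<and> is_cokernel X Y G C P \<longrightarrow> C \<in> S)"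
      proof (intro allI impI)
        fix Y :: "('k, 'l) rep" and G :: "'k mat" and C :: "('k, 'l) rep" and P :: "'k mat"
        assume h1: "Y \<in> S \<and> is_hom X Y G" and h2: "is_module sc C \<and> is_cokernel X Y G C P"
        hence "is_hom Y C P" "is_epi Y C P" unfolding is_cokernel_def by auto
        thus "C \<in> S" using quot[of C Y P] h1 h2 by blast
      qed
      thus "X \<in> W_R sc S" unfolding W_R_def using X by blast
    qed
  qed
  have "left_finite_wide sc S" unfolding left_finite_wide_def using wide tc ff WL by blast
  moreover have "right_finite_wide sc S" unfolding right_finite_wide_def using wide tfc ff WR by blast
  ultimately show ?thesis ..
qed

end
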